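(* Let $r\ge0$ be an integer and let $J\subseteq\mathbb{N}_0$ be either $J=\{0,\dots,N-1\}$ for some $N\in\mathbb{N}$ or $J=\mathbb{N}_0$. Let $\mathcal{X}$ be the determinantal point process on $\mathbb{C}$ with correlation kernel $$K_{r,J}(z,z')=e^{-\frac{\pi}{2}(|z|^2+|z'|^2)}\sum_{j\in J}H_{j,r}(z,\overline z)\,\overline{H_{j,r}(z',\overline{z'})}.$$ Then the family $\{D_R:R>0\}$ of all disks in $\mathbb{C}$ centered at the origin is simultaneously observable for $\mathcal{X}$.
   Context: Laguerre polynomials: $L_j^{\alpha}(x)=\sum_{i=0}^{j}(-1)^i\binom{j+\alpha}{j-i}\frac{x^i}{i!}$. Complex Hermite polynomials: $H_{j,r}(z,\overline z)=\sqrt{\frac{r!}{j!}}\pi^{\frac{j-r}{2}}z^{j-r}L_r^{j-r}(\pi|z|^2)$ if $j>r$, and $H_{j,r}(z,\overline z)=(-1)^{r-j}\sqrt{\frac{j!}{r!}}\pi^{\frac{r-j}{2}}\overline{z}^{\,r-j}L_j^{r-j}(\pi|z|^2)$ if $j\le r$. For a determinantal point process with Hermitian locally trace-class kernel $K$ (whose integral operator $P_K$ is an orthogonal projection here), and a measurable set $\Omega$, the restriction operator is $T_\Omega F=1_\Omega\,P_K(1_\Omega F)$ on $L^2(\mathbb{C})$. A family of sets $\{\Omega_\gamma:\gamma\in\Gamma\}$ is simultaneously observable for the process if, with $\Omega=\bigcup_\gamma\Omega_\gamma$, there is an orthogonal basis $\{\varphi_j:j\in J'\}$ of the closure of the range of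 $T_\Omega$ consisting of eigenfunctions of $T_\Omega$ such that for each $\gamma\in\Gamma$ the restricted functions $\{\varphi_j|_{\Omega_\gamma}:j\in J'\}$ are mutually orthogonal in $L^2(\Omega_\gamma)$. *)

theory Defs
  imports "HOL-Analysis.Analysis"
begin

definition laguerre :: "nat \<Rightarrow> nat \<Rightarrow> real \<Rightarrow> real" where
  "laguerre j \<alpha> x = (\<Sum>i\<le>j. (-1)^i * real ((j + \<alpha>) choose (j - i)) * x ^ i / fact i)"

definition cHermite :: "nat \<Rightarrow> nat \<Rightarrow> complex \<Rightarrow> complex" where
  "cHermite j r z =
     (if j > r then
        complex_of_real (sqrt (fact r / fact j) * pi powr (real (j - r) / 2)
          * laguerre r (j - r) (pi * (cmod z)^2)) * z ^ (j - r)
      else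
        complex_of_real ((-1) ^ (r - j) * sqrt (fact j / fact r) * pi powr (real (r - j) / 2)
          * laguerre j (r - j) (pi * (cmod z)^2)) * (cnj z) ^ (r - j))"

definition kernelK :: "nat \<Rightarrow> nat set \<Rightarrow> complex \<Rightarrow> complex \<Rightarrow> complex" where
  "kernelK r J z w =
     complex_of_real (exp (- pi / 2 * ((cmod z)^2 + (cmod w)^2)))
     * (\<Sum>\<^sub>\<infinity>j\<in>J. cHermite j r z * cnj (cHermite j r w))"

section \<open>L^2(C) (with respect to Lebesgue measure), on representatives\<close>

definition L2 :: "(complex \<Rightarrow> complex) set" where
  "L2 = {f. f \<in> borel_measurable lborel \<and> integrable lborel (\<lambda>z. (cmod (f z))^2)}"

definition L2_inner_on :: "complex set \<Rightarrow> (complex \<Rightarrow> complex) \<Rightarrow> (complex \<Rightarrow> complex) \<Rightarrow> complex" where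
  "L2_inner_on A f g = (LINT z|lborel. indicator A z * (f z * cnj (g z)))"

definition L2_inner :: "(complex \<Rightarrow> complex) \<Rightarrow> (complex \<Rightarrow> complex) \<Rightarrow> complex" where
  "L2_inner f g = (LINT z|lborel. f z * cnj (g z))"

definition L2_norm :: "(complex \<Rightarrow> complex) \<Rightarrow> real" where
  "L2_norm f = sqrt (LINT z|lborel. (cmod (f z))^2)"

definition intop :: "(complex \<Rightarrow> complex \<Rightarrow> complex) \<Rightarrow> (complex \<Rightarrow> complex) \<Rightarrow> (complex \<Rightarrow> complex)" where
  "intop K F = (\<lambda>z. LINT w|lborel. K z w * F w)"

definition restr_op :: "(complex \<Rightarrow> complex \<Rightarrow> complex) \<Rightarrow> complex set \<Rightarrow> (complex \<Rightarrow> complex) \<Rightarrow> (complex \<Rightarrow> complex)" where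
  "restr_op K \<Omega> F = (\<lambda>z. indicator \<Omega> z * intop K (\<lambda>w. indicator \<Omega> w * F w) z)"

definition range_closure :: "((complex \<Rightarrow> complex) \<Rightarrow> (complex \<Rightarrow> complex)) \<Rightarrow> (complex \<Rightarrow> complex) set" where
  "range_closure T = {F \<in> L2. \<forall>e>0. \<exists>G\<in>L2. L2_norm (\<lambda>z. F z - T G z) < e}"

definition eigenfunction :: "((complex \<Rightarrow> complex) \<Rightarrow> (complex \<Rightarrow> complex)) \<Rightarrow> (complex \<Rightarrow> complex) \<Rightarrow> bool" where
  "eigenfunction T \<phi> \<longleftrightarrow> \<phi> \<in> L2 \<and> \<not> (AE z in lborel. \<phi> z = 0)
      \<and> (\<exists>c. AE z in lborel. T \<phi> z = c * \<phi> z)"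

definition orth_basis_of :: "(complex \<Rightarrow> complex) set \<Rightarrow> (complex \<Rightarrow> complex) set \<Rightarrow> bool" where
  "orth_basis_of B V \<longleftrightarrow> B \<subseteq> V
     \<and> (\<forall>\<phi>\<in>B. \<not> (AE z in lborel. \<phi> z = 0))
     \<and> (\<forall>\<phi>\<in>B. \<forall>\<psi>\<in>B. \<phi> \<noteq> \<psi> \<longrightarrow> L2_inner \<phi> \<psi> = 0)
     \<and> (\<forall>F\<in>V. \<forall>e>0. \<exists>S c. finite S \<and> S \<subseteq> B \<and>
            L2_norm (\<lambda>z. F z - (\<Sum>\<phi>\<in>S. c \<phi> * \<phi> z)) < e)"

definition simultaneously_observable :: "(complex \<Rightarrow> complex \<Rightarrow> complex) \<Rightarrow> complex set set \<Rightarrow> bool" where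
  "simultaneously_observable K \<F> \<longleftrightarrow>
     (let \<Omega> = \<Union>\<F>; T = restr_op K \<Omega> in
      \<exists>B. orth_basis_of B (range_closure T) \<and> (\<forall>\<phi>\<in>B. eigenfunction T \<phi>)
        \<and> (\<forall>A\<in>\<F>. \<forall>\<phi>\<in>B. \<forall>\<psi>\<in>B. \<phi> \<noteq> \<psi> \<longrightarrow> L2_inner_on A \<phi> \<psi> = 0))"

end

theory Submission
  imports Defs "HOL-Probability.Distributions" "HOL-Computational_Algebra.Formal_Power_Series"
begin

lemma lborel_complex_pair:
  "distr (lborel \<Otimes>\<^sub>M lborel) borel (\<lambda>(x,y). Complex x y) = (lborel :: complex measure)"
proof (rule lborel_eqI[symmetric])
  fix l u :: complex
  assume le: "\<And>b. b \<in> Basis \<Longrightarrow> l \<bullet> b \<le> u \<bullet> b"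
  have m: "(\<lambda>(x,y). Complex x y) \<in> borel_measurable (lborel \<Otimes>\<^sub>M lborel)"
  proof -
    have "(\<lambda>(x,y). Complex x y) = (\<lambda>p. complex_of_real (fst p) + \<i> * complex_of_real (snd p))"
      by (auto simp: fun_eq_iff complex_eq_iff)
    then show ?thesis by simp
  qed
  have pre: "(\<lambda>(x,y). Complex x y) -` box l u \<inter> space (lborel \<Otimes>\<^sub>M lborel)
     = {Re l<..<Re u} \<times> {Im l<..<Im u}"
    by (auto simp: box_def Basis_complex_def inner_complex_def space_pair_measure)
  have "Re l \<le> Re u" "Im l \<le> Im u" using le[of 1] le[of \<i>] by (auto simp: inner_complex_def)
  then show "emeasure (distr (lborel \<Otimes>\<^sub>M lborel) borel (\<lambda>(x,y). Complex x y)) (box l u) =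
        ennreal (\<Prod>b\<in>Basis. (u - l) \<bullet> b)"
    using m by (simp add: emeasure_distr pre lborel.emeasure_pair_measure_Times Basis_complex_def
        inner_complex_def ennreal_mult)
qed simp

abbreviation "P2 \<equiv> (lborel \<Otimes>\<^sub>M lborel :: (real \<times> real) measure)"

lemma distr_P2_eqI:
  fixes S :: "real \<times> real \<Rightarrow> real \<times> real"
  assumes Sm[measurable]: "S \<in> P2 \<rightarrow>\<^sub>M P2"
    and eq: "\<And>g. g \<in> borel_measurable P2 \<Longrightarrow> (\<integral>\<^sup>+p. g (S p) \<partial>P2) = (\<integral>\<^sup>+p. g p \<partial>P2)"
  shows "distr P2 P2 S = P2"
proof (rule measure_eqI)
  fix A assume A: "A \<in> sets (distr P2 P2 S)"
  then have A': "A \<in> sets P2" by simp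
  have "emeasure (distr P2 P2 S) A = emeasure P2 (S -` A \<inter> space P2)"
    using A' by (simp add: emeasure_distr)
  also have "\<dots> = (\<integral>\<^sup>+p. indicator (S -` A \<inter> space P2) p \<partial>P2)"
    using measurable_sets[OF Sm A'] by simp
  also have "\<dots> = (\<integral>\<^sup>+p. indicator A (S p) \<partial>P2)"
    by (intro nn_integral_cong) (auto split: split_indicator simp: space_pair_measure)
  also have "\<dots> = (\<integral>\<^sup>+p. indicator A p \<partial>P2)"
    using A' by (intro eq) auto
  also have "\<dots> = emeasure P2 A" using A' by simp
  finally show "emeasure (distr P2 P2 S) A = emeasure P2 A" .
qed simp

lemma shear1:
  "distr P2 P2 (\<lambda>(x,y). (x + a * y, y)) = P2"
proof (rule distr_P2_eqI)
  show "(\<lambda>(x,y). (x + a * y, y)) \<in> P2 \<rightarrow>\<^sub>M P2"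
    by (simp add: measurable_pair_iff case_prod_beta')
  fix g :: "real \<times> real \<Rightarrow> ennreal" assume gm[measurable]: "g \<in> borel_measurable P2"
  have "(\<integral>\<^sup>+p. g ((\<lambda>(x,y). (x + a * y, y)) p) \<partial>P2) = (\<integral>\<^sup>+y. \<integral>\<^sup>+x. g (x + a * y, y) \<partial>lborel \<partial>lborel)"
    by (subst lborel_pair.nn_integral_snd[symmetric]) (auto simp: case_prod_beta')
  also have "\<dots> = (\<integral>\<^sup>+y. \<integral>\<^sup>+x. g (x, y) \<partial>lborel \<partial>lborel)"
  proof (rule nn_integral_cong)
    fix y :: real
    show "(\<integral>\<^sup>+x. g (x + a * y, y) \<partial>lborel) = (\<integral>\<^sup>+x. g (x, y) \<partial>lborel)"
      using nn_integral_real_affine[of "\<lambda>x. g (x, y)" 1 "a*y"] by (simp add: add.commute)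
  qed
  also have "\<dots> = (\<integral>\<^sup>+p. g p \<partial>P2)"
    by (subst lborel_pair.nn_integral_snd[symmetric]) auto
  finally show "(\<integral>\<^sup>+p. g ((\<lambda>(x,y). (x + a * y, y)) p) \<partial>P2) = (\<integral>\<^sup>+p. g p \<partial>P2)" .
qed

lemma shear2:
  "distr P2 P2 (\<lambda>(x,y). (x, y + b * x)) = P2"
proof (rule distr_P2_eqI)
  show "(\<lambda>(x,y). (x, y + b * x)) \<in> P2 \<rightarrow>\<^sub>M P2"
    by (simp add: measurable_pair_iff case_prod_beta')
  fix g :: "real \<times> real \<Rightarrow> ennreal" assume gm[measurable]: "g \<in> borel_measurable P2"
  have "(\<integral>\<^sup>+p. g ((\<lambda>(x,y). (x, y + b * x)) p) \<partial>P2) = (\<integral>\<^sup>+x. \<integral>\<^sup>+y. g (x, y + b * x) \<partial>lborel \<partial>lborel)"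
    by (subst lborel.nn_integral_fst[symmetric]) (auto simp: case_prod_beta')
  also have "\<dots> = (\<integral>\<^sup>+x. \<integral>\<^sup>+y. g (x, y) \<partial>lborel \<partial>lborel)"
  proof (rule nn_integral_cong)
    fix x :: real
    show "(\<integral>\<^sup>+y. g (x, y + b * x) \<partial>lborel) = (\<integral>\<^sup>+y. g (x, y) \<partial>lborel)"
      using nn_integral_real_affine[of "\<lambda>y. g (x, y)" 1 "b*x"] by (simp add: add.commute)
  qed
  also have "\<dots> = (\<integral>\<^sup>+p. g p \<partial>P2)"
    by (subst lborel.nn_integral_fst[symmetric]) auto
  finally show "(\<integral>\<^sup>+p. g ((\<lambda>(x,y). (x, y + b * x)) p) \<partial>P2) = (\<integral>\<^sup>+p. g p \<partial>P2)" .
qed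

lemma rot_P2:
  fixes c s :: real
  assumes cs: "c^2 + s^2 = 1" and c: "c \<noteq> -1"
  shows "distr P2 P2 (\<lambda>(x,y). (c*x - s*y, s*x + c*y)) = P2"
proof -
  define t where "t = s / (1 + c)"
  have "c \<ge> -1" using cs by (smt (verit, best) power2_eq_square sum_squares_bound abs_le_square_iff power2_abs le_add_same_cancel1 zero_le_power2 abs_le_D2 one_power2 power2_le_imp_le)
  then have c1: "1 + c > 0" using c by linarith
  have st: "s * t = 1 - c"
  proof -
    have "s * t = s^2 / (1 + c)" by (simp add: t_def power2_eq_square)
    also have "\<dots> = (1 - c) * (1 + c) / (1 + c)" using cs by (simp add: algebra_simps power2_eq_square)
    finally show ?thesis using c1 by simp
  qed
  have tt: "2 * t - s * t^2 = s"
  proof -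
    have "2 * t - s * t^2 = t * (2 - s * t)" by (simp add: power2_eq_square algebra_simps)
    also have "\<dots> = t * (1 + c)" by (simp add: st)
    finally show ?thesis using c1 by (simp add: t_def)
  qed
  define S1 where "S1 = (\<lambda>(x::real,y::real). (x + (-t) * y, y))"
  define S2 where "S2 = (\<lambda>(x::real,y::real). (x, y + s * x))"
  have m1[measurable]: "S1 \<in> P2 \<rightarrow>\<^sub>M P2" unfolding S1_def
    by (simp add: measurable_pair_iff case_prod_beta')
  have m2[measurable]: "S2 \<in> P2 \<rightarrow>\<^sub>M P2" unfolding S2_def
    by (simp add: measurable_pair_iff case_prod_beta')
  have eq: "(\<lambda>(x,y). (c*x - s*y, s*x + c*y)) = S1 \<circ> S2 \<circ> S1"
  proof
    fix p :: "real \<times> real"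
    obtain x y where p: "p = (x,y)" by (cases p)
    have "(S1 \<circ> S2 \<circ> S1) p = (x - t*y - t*(y + s*x - s*t*y), y + s*x - s*t*y)"
      by (simp add: S1_def S2_def p algebra_simps)
    also have "\<dots> = (x*(1 - s*t) - y*(2*t - s*t^2), s*x + y*(1 - s*t))"
      by (simp add: algebra_simps power2_eq_square)
    also have "\<dots> = (c*x - s*y, s*x + c*y)"
    proof -
      have st': "1 - s*t = c" using st by simp
      show ?thesis unfolding st' tt by (simp add: mult.commute)
    qed
    finally show "(\<lambda>(x,y). (c*x - s*y, s*x + c*y)) p = (S1 \<circ> S2 \<circ> S1) p" by (simp add: p)
  qed
  have d1: "distr P2 P2 S1 = P2" unfolding S1_def by (rule shear1)
  have d2: "distr P2 P2 S2 = P2" unfolding S2_def by (rule shear2)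
  have "distr P2 P2 (S1 \<circ> S2 \<circ> S1) = distr (distr (distr P2 P2 S1) P2 S2) P2 S1"
    by (simp add: distr_distr comp_assoc)
  also have "\<dots> = P2" by (simp add: d1 d2)
  finally show ?thesis by (simp add: eq)
qed

lemma lborel_rotate:
  fixes u :: complex
  assumes u: "cmod u = 1" "u \<noteq> -1"
  shows "distr lborel borel (\<lambda>z. u * z) = (lborel :: complex measure)"
proof -
  define c s where "c = Re u" and "s = Im u"
  have cs: "c^2 + s^2 = 1" using u(1) unfolding c_def s_def cmod_def by simp
  have c: "c \<noteq> -1"
  proof
    assume "c = -1"
    then have "s = 0" using cs by simp
    then show False using u(2) \<open>c = -1\<close> unfolding c_def s_def by (simp add: complex_eq_iff)
  qed
  define \<Phi> where "\<Phi> = (\<lambda>(x::real,y::real). Complex x y)"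
  define R where "R = (\<lambda>(x::real,y::real). (c*x - s*y, s*x + c*y))"
  have \<Phi>m[measurable]: "\<Phi> \<in> borel_measurable P2"
  proof -
    have "\<Phi> = (\<lambda>p. complex_of_real (fst p) + \<i> * complex_of_real (snd p))"
      by (auto simp: \<Phi>_def fun_eq_iff complex_eq_iff)
    then show ?thesis by simp
  qed
  have Rm[measurable]: "R \<in> P2 \<rightarrow>\<^sub>M P2" unfolding R_def
    by (simp add: measurable_pair_iff case_prod_beta')
  have L: "lborel = distr P2 borel \<Phi>" unfolding \<Phi>_def by (rule lborel_complex_pair[symmetric])
  have comp: "(\<lambda>z. u * z) \<circ> \<Phi> = \<Phi> \<circ> R"
    by (auto simp: fun_eq_iff \<Phi>_def R_def c_def s_def complex_eq_iff)
  have "distr lborel borel (\<lambda>z. u * z) = distr (distr P2 borel \<Phi>) borel (\<lambda>z. u * z)"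
    by (simp add: L[symmetric])
  also have "\<dots> = distr P2 borel ((\<lambda>z. u * z) \<circ> \<Phi>)"
    by (subst distr_distr) auto
  also have "\<dots> = distr P2 borel (\<Phi> \<circ> R)" by (simp add: comp)
  also have "\<dots> = distr (distr P2 P2 R) borel \<Phi>"
    by (subst distr_distr) auto
  also have "\<dots> = distr P2 borel \<Phi>" unfolding R_def using rot_P2[OF cs c] by simp
  also have "\<dots> = lborel" by (simp add: L)
  finally show ?thesis .
qed

lemma integral_rotate:
  fixes u :: complex and f :: "complex \<Rightarrow> complex"
  assumes u: "cmod u = 1" "u \<noteq> -1" and f[measurable]: "f \<in> borel_measurable borel"
  shows "(LINT z|lborel. f (u * z)) = (LINT z|lborel. f z)"
proof -
  have "(LINT z|lborel. f z) = (LINT z|distr lborel borel (\<lambda>z. u * z). f z)"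
    by (simp add: lborel_rotate[OF u])
  also have "\<dots> = (LINT z|lborel. f (u * z))"
    by (subst integral_distr) auto
  finally show ?thesis by simp
qed

lemma nn_SUP_Icc:
  fixes h :: "real \<Rightarrow> real" and B :: "nat \<Rightarrow> real"
  assumes hm[measurable]: "h \<in> borel_measurable borel" and hn: "\<And>x. h x \<ge> 0"
    and Bm: "mono B" and Bl: "\<And>x. \<exists>n. x \<le> B n"
  shows "(\<integral>\<^sup>+x. ennreal (h x) * indicator {0..} x \<partial>lborel) =
         (SUP n. \<integral>\<^sup>+x. ennreal (h x * indicator {0..B n} x) \<partial>lborel)"
proof -
  let ?f = "\<lambda>n x. ennreal (h x * indicator {0..B n} x)"
  have "(SUP n. ?f n x) = ennreal (h x) * indicator {0..} x" for x
  proof (rule LIMSEQ_unique[OF LIMSEQ_SUP])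
    show "incseq (\<lambda>n. ?f n x)"
      using Bm hn by (auto simp: incseq_def mono_def split: split_indicator intro: order_trans)
    obtain n where n: "x \<le> B n" using Bl by blast
    have "eventually (\<lambda>m. ?f m x = ennreal (h x) * indicator {0..} x) sequentially"
    proof (rule eventually_sequentiallyI[where c=n])
      fix m assume "n \<le> m"
      then have "B n \<le> B m" using Bm by (simp add: monoD)
      then show "?f m x = ennreal (h x) * indicator {0..} x"
        using n by (auto split: split_indicator)
    qed
    then show "(\<lambda>m. ?f m x) \<longlonglongrightarrow> ennreal (h x) * indicator {0..} x"
      by (rule tendsto_eventually)
  qed
  then have "(\<integral>\<^sup>+x. ennreal (h x) * indicator {0..} x \<partial>lborel) = (\<integral>\<^sup>+x. (SUP n. ?f n x) \<partial>lborel)"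
    by simp
  also have "\<dots> = (SUP n. \<integral>\<^sup>+x. ?f n x \<partial>lborel)"
    by (rule nn_integral_monotone_convergence_SUP)
       (use Bm hn in \<open>auto simp: incseq_def le_fun_def mono_def split: split_indicator intro: order_trans\<close>)
  finally show ?thesis .
qed

lemma nn_sub_sq:
  fixes f :: "real \<Rightarrow> real" and a :: real
  assumes a: "a > 0" and fm[measurable]: "f \<in> borel_measurable borel" and fn: "\<And>x. f x \<ge> 0"
  shows "(\<integral>\<^sup>+x. ennreal (2*a*x * f (a*x^2)) * indicator {0..} x \<partial>lborel) =
         (\<integral>\<^sup>+u. ennreal (f u) * indicator {0..} u \<partial>lborel)"
proof -
  have e: "(\<integral>\<^sup>+x. ennreal (f x * indicator {0..a * (real n)^2} x) \<partial>lborel) =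
        (\<integral>\<^sup>+x. ennreal (2*a*x * f (a*x^2) * indicator {0..real n} x) \<partial>lborel)" for n
  proof -
    have "(\<integral>\<^sup>+x. ennreal (f x * indicator {(\<lambda>x. a*x^2) 0..(\<lambda>x. a*x^2) (real n)} x) \<partial>lborel) =
        (\<integral>\<^sup>+x. ennreal (f ((\<lambda>x. a*x^2) x) * (2*a*x) * indicator {0..real n} x) \<partial>lborel)"
      by (rule nn_integral_substitution[where g' = "\<lambda>x. 2*a*x"])
         (use a in \<open>auto intro!: derivative_eq_intros continuous_intros simp: set_borel_measurable_def\<close>)
    then show ?thesis by (simp add: mult_ac)
  qed
  have m1: "mono (\<lambda>n::nat. a * (real n)^2)"
    using a by (auto simp: mono_def intro!: mult_left_mono power_mono)
  have l1: "\<exists>n. x \<le> a * (real n)^2" for x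
  proof -
    obtain n :: nat where n: "x / a \<le> real n" "1 \<le> real n"
      by (metis real_arch_simple max.bounded_iff  nat_le_real_less of_nat_max  of_nat_1 linorder_le_cases)
    have "real n \<le> (real n)^2" using n(2) by (simp add: power2_eq_square)
    then have "x \<le> a * real n" using n a by (simp add: divide_le_eq mult.commute)
    also have "\<dots> \<le> a * (real n)^2" using a \<open>real n \<le> (real n)^2\<close> by simp
    finally show ?thesis by blast
  qed
  have m2: "mono (\<lambda>n::nat. real n)" by (auto simp: mono_def)
  have l2: "\<exists>n. x \<le> real n" for x by (meson real_arch_simple)
  have "(\<integral>\<^sup>+u. ennreal (f u) * indicator {0..} u \<partial>lborel) =
      (SUP n. \<integral>\<^sup>+x. ennreal (f x * indicator {0..a * (real n)^2} x) \<partial>lborel)"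
    by (rule nn_SUP_Icc[OF fm fn m1 l1])
  also have "\<dots> = (SUP n. \<integral>\<^sup>+x. ennreal (2*a*x * f (a*x^2) * indicator {0..real n} x) \<partial>lborel)"
    by (simp add: e)
  also have "\<dots> = (\<integral>\<^sup>+x. ennreal (2*a*x * f (a*x^2) * indicator {0..} x) \<partial>lborel)"
  proof -
    have "(\<integral>\<^sup>+x. ennreal ((if x \<ge> 0 then 2*a*x * f (a*x^2) else 0)) * indicator {0..} x \<partial>lborel) =
      (SUP n. \<integral>\<^sup>+x. ennreal ((if x \<ge> 0 then 2*a*x * f (a*x^2) else 0) * indicator {0..real n} x) \<partial>lborel)"
      by (rule nn_SUP_Icc[OF _ _ m2 l2]) (use a fn in \<open>auto intro!: mult_nonneg_nonneg\<close>)
    moreover have "(\<lambda>x. ennreal ((if x \<ge> 0 then 2*a*x * f (a*x^2) else 0)) * indicator {0..} x) =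
       (\<lambda>x. ennreal (2*a*x * f (a*x^2) * indicator {0..} x))"
      by (auto simp: fun_eq_iff split: split_indicator)
    moreover have "\<And>n. (\<lambda>x. ennreal ((if x \<ge> 0 then 2*a*x * f (a*x^2) else 0) * indicator {0..real n} x)) =
       (\<lambda>x. ennreal (2*a*x * f (a*x^2) * indicator {0..real n} x))"
      by (auto simp: fun_eq_iff split: split_indicator)
    ultimately show ?thesis by simp
  qed
  also have "\<dots> = (\<integral>\<^sup>+x. ennreal (2*a*x * f (a*x^2)) * indicator {0..} x \<partial>lborel)"
    by (intro nn_integral_cong) (auto split: split_indicator)
  finally show ?thesis by simp
qed

lemma nn_even:
  fixes h :: "real \<Rightarrow> ennreal"
  assumes hm[measurable]: "h \<in> borel_measurable borel" and ev: "\<And>x. h (-x) = h x"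
  shows "(\<integral>\<^sup>+x. h x \<partial>lborel) = 2 * (\<integral>\<^sup>+x. h x * indicator {0..} x \<partial>lborel)"
proof -
  have "(\<integral>\<^sup>+x. h x \<partial>lborel) = (\<integral>\<^sup>+x. h x * indicator {0..} x + h x * indicator {..0} x \<partial>lborel)"
    by (intro nn_integral_cong_AE AE_I[where N="{0}"]) (auto split: split_indicator)
  also have "\<dots> = (\<integral>\<^sup>+x. h x * indicator {0..} x \<partial>lborel) + (\<integral>\<^sup>+x. h x * indicator {..0} x \<partial>lborel)"
    by (rule nn_integral_add) auto
  also have "(\<integral>\<^sup>+x. h x * indicator {..0} x \<partial>lborel) = (\<integral>\<^sup>+x. h x * indicator {0..} x \<partial>lborel)"
  proof -
    have "(\<integral>\<^sup>+x. h x * indicator {..0} x \<partial>lborel) = ennreal \<bar>-1\<bar> * (\<integral>\<^sup>+x. h (0 + (-1) * x) * indicator {..0} (0 + (-1) * x) \<partial>lborel)"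
      by (rule nn_integral_real_affine) auto
    also have "\<dots> = (\<integral>\<^sup>+x. h x * indicator {0..} x \<partial>lborel)"
      by (auto simp: ev intro!: nn_integral_cong split: split_indicator)
    finally show ?thesis .
  qed
  finally show ?thesis by (simp add: mult_2)
qed

lemma nn_arctan: "(\<integral>\<^sup>+s. ennreal (1 / (1 + s^2)) * indicator {0..} s \<partial>lborel) = ennreal (pi / 2)"
proof -
  have "(\<integral>\<^sup>+s. ennreal (1 / (1 + s^2)) * indicator {0..} s \<partial>lborel) = ennreal (pi/2 - arctan 0)"
  proof (rule nn_integral_FTC_atLeast)
    show "((\<lambda>a. arctan a) \<longlongrightarrow> pi / 2) at_top" by (rule tendsto_arctan_at_top)
  qed (auto intro!: derivative_eq_intros simp: add_nonneg_eq_0_iff field_simps power2_eq_square)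
  then show ?thesis by simp
qed

lemma radial:
  fixes f :: "real \<Rightarrow> real"
  assumes fm[measurable]: "f \<in> borel_measurable borel" and fn: "\<And>x. f x \<ge> 0"
  shows "(\<integral>\<^sup>+z. ennreal (f ((cmod z)^2)) \<partial>(lborel::complex measure)) =
         ennreal pi * (\<integral>\<^sup>+u. ennreal (f u) * indicator {0..} u \<partial>lborel)"
proof -
  define I where "I = (\<integral>\<^sup>+u. ennreal (f u) * indicator {0..} u \<partial>lborel)"
  have \<Phi>m: "(\<lambda>(x::real,y::real). Complex x y) \<in> borel_measurable P2"
  proof -
    have "(\<lambda>(x::real,y::real). Complex x y) = (\<lambda>p. complex_of_real (fst p) + \<i> * complex_of_real (snd p))"
      by (auto simp: fun_eq_iff complex_eq_iff)
    then show ?thesis by simp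
  qed
  have "(\<integral>\<^sup>+z. ennreal (f ((cmod z)^2)) \<partial>(lborel::complex measure)) =
      (\<integral>\<^sup>+z. ennreal (f ((cmod z)^2)) \<partial>distr P2 borel (\<lambda>(x,y). Complex x y))"
    by (simp add: lborel_complex_pair)
  also have "\<dots> = (\<integral>\<^sup>+p. ennreal (f ((cmod ((\<lambda>(x,y). Complex x y) p))^2)) \<partial>P2)"
    by (rule nn_integral_distr[OF \<Phi>m]) simp
  also have "\<dots> = (\<integral>\<^sup>+p. ennreal (f (fst p ^2 + snd p ^2)) \<partial>P2)"
    by (intro nn_integral_cong) (auto simp: cmod_def case_prod_beta)
  also have "\<dots> = (\<integral>\<^sup>+x. \<integral>\<^sup>+y. ennreal (f (x^2 + y^2)) \<partial>lborel \<partial>lborel)"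
    by (subst lborel.nn_integral_fst[symmetric]) auto
  also have "\<dots> = (\<integral>\<^sup>+x. 2 * (\<integral>\<^sup>+y. ennreal (f (x^2 + y^2)) * indicator {0..} y \<partial>lborel) \<partial>lborel)"
    by (intro nn_integral_cong nn_even) auto
  also have "\<dots> = 2 * (\<integral>\<^sup>+x. (\<integral>\<^sup>+y. ennreal (f (x^2 + y^2)) * indicator {0..} y \<partial>lborel) \<partial>lborel)"
    by (subst nn_integral_cmult) auto
  also have "(\<integral>\<^sup>+x. (\<integral>\<^sup>+y. ennreal (f (x^2 + y^2)) * indicator {0..} y \<partial>lborel) \<partial>lborel) =
     2 * (\<integral>\<^sup>+x. (\<integral>\<^sup>+y. ennreal (f (x^2 + y^2)) * indicator {0..} y \<partial>lborel) * indicator {0..} x \<partial>lborel)"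
    by (rule nn_even) auto
  also have "(\<integral>\<^sup>+x. (\<integral>\<^sup>+y. ennreal (f (x^2 + y^2)) * indicator {0..} y \<partial>lborel) * indicator {0..} x \<partial>lborel)
      = (\<integral>\<^sup>+x. (\<integral>\<^sup>+s. ennreal (x * f (x^2 * (1 + s^2))) * indicator {0..} s \<partial>lborel) * indicator {0..} x \<partial>lborel)"
  proof (intro nn_integral_cong_AE)
    show "AE x in lborel. (\<integral>\<^sup>+y. ennreal (f (x^2 + y^2)) * indicator {0..} y \<partial>lborel) * indicator {0..} x =
      (\<integral>\<^sup>+s. ennreal (x * f (x^2 * (1 + s^2))) * indicator {0..} s \<partial>lborel) * indicator {0..} x"
    using AE_lborel_singleton[of 0] proof eventually_elim
    case (elim x)
    then have x: "x \<noteq> 0" by simp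
    show "(\<integral>\<^sup>+y. ennreal (f (x^2 + y^2)) * indicator {0..} y \<partial>lborel) * indicator {0..} x =
      (\<integral>\<^sup>+s. ennreal (x * f (x^2 * (1 + s^2))) * indicator {0..} s \<partial>lborel) * indicator {0..} x"
    proof (cases "x > 0")
      case True
      have "(\<integral>\<^sup>+y. ennreal (f (x^2 + y^2)) * indicator {0..} y \<partial>lborel) =
        ennreal \<bar>x\<bar> * (\<integral>\<^sup>+s. ennreal (f (x^2 + (x * s)^2)) * indicator {0..} (x * s) \<partial>lborel)"
        using nn_integral_real_affine[of "\<lambda>y. ennreal (f (x^2 + y^2)) * indicator {0..} y" x 0] x by simp
      also have "\<dots> = (\<integral>\<^sup>+s. ennreal (x * f (x^2 * (1 + s^2))) * indicator {0..} s \<partial>lborel)"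
        using True by (subst nn_integral_cmult[symmetric])
          (auto intro!: nn_integral_cong simp: ennreal_mult' algebra_simps power2_eq_square zero_le_mult_iff split: split_indicator)
      finally show ?thesis by simp
    qed (use x in \<open>auto split: split_indicator\<close>)
    qed
  qed
  also have "\<dots> = (\<integral>\<^sup>+s. (\<integral>\<^sup>+x. ennreal (x * f (x^2 * (1 + s^2))) * indicator {0..} x \<partial>lborel) * indicator {0..} s \<partial>lborel)"
  proof -
    have "(\<integral>\<^sup>+x. (\<integral>\<^sup>+s. ennreal (x * f (x^2 * (1 + s^2))) * indicator {0..} s \<partial>lborel) * indicator {0..} x \<partial>lborel)
      = (\<integral>\<^sup>+x. \<integral>\<^sup>+s. ennreal (x * f (x^2 * (1 + s^2))) * indicator {0..} s * indicator {0..} x \<partial>lborel \<partial>lborel)"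
      by (intro nn_integral_cong) (simp add: nn_integral_multc)
    also have "\<dots> = (\<integral>\<^sup>+s. \<integral>\<^sup>+x. ennreal (x * f (x^2 * (1 + s^2))) * indicator {0..} s * indicator {0..} x \<partial>lborel \<partial>lborel)"
      by (rule lborel_pair.Fubini'[symmetric]) auto
    also have "\<dots> = (\<integral>\<^sup>+s. (\<integral>\<^sup>+x. ennreal (x * f (x^2 * (1 + s^2))) * indicator {0..} x \<partial>lborel) * indicator {0..} s \<partial>lborel)"
      by (intro nn_integral_cong, subst nn_integral_multc[symmetric]) (auto simp: mult_ac)
    finally show ?thesis .
  qed
  also have "\<dots> = (\<integral>\<^sup>+s. ennreal (1 / (2 * (1 + s^2))) * I * indicator {0..} s \<partial>lborel)"
  proof (intro nn_integral_cong)
    fix s :: real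
    have a: "1 + s^2 > 0" by (simp add: add_pos_nonneg)
    have "I = (\<integral>\<^sup>+x. ennreal (2*(1+s^2)*x * f ((1+s^2)*x^2)) * indicator {0..} x \<partial>lborel)"
      unfolding I_def by (rule nn_sub_sq[symmetric, OF a fm fn])
    also have "\<dots> = ennreal (2*(1+s^2)) * (\<integral>\<^sup>+x. ennreal (x * f (x^2 * (1 + s^2))) * indicator {0..} x \<partial>lborel)"
    proof (subst nn_integral_cmult[symmetric], simp, intro nn_integral_cong)
      fix x :: real
      show "ennreal (2*(1+s^2)*x * f ((1+s^2)*x^2)) * indicator {0..} x =
        ennreal (2*(1+s^2)) * (ennreal (x * f (x^2 * (1 + s^2))) * indicator {0..} x)"
      proof (cases "x \<ge> 0")
        case True
        have "ennreal (2*(1+s^2)*x * f ((1+s^2)*x^2)) = ennreal (2*(1+s^2)) * ennreal (x * f (x^2 * (1 + s^2)))"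
          using a True fn by (subst ennreal_mult[symmetric]) (auto simp: mult_ac)
        then show ?thesis by (simp add: mult.assoc)
      qed simp
    qed
    finally have IX: "I = ennreal (2*(1+s^2)) * (\<integral>\<^sup>+x. ennreal (x * f (x^2 * (1 + s^2))) * indicator {0..} x \<partial>lborel)" .
    have one: "ennreal (1 / (2 * (1 + s^2))) * ennreal (2*(1+s^2)) = 1"
      using a by (subst ennreal_mult[symmetric]) auto
    have "ennreal (1 / (2 * (1 + s^2))) * I = (\<integral>\<^sup>+x. ennreal (x * f (x^2 * (1 + s^2))) * indicator {0..} x \<partial>lborel)"
      unfolding IX mult.assoc[symmetric] one by simp
    then show "(\<integral>\<^sup>+x. ennreal (x * f (x^2 * (1 + s^2))) * indicator {0..} x \<partial>lborel) * indicator {0..} s =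
        ennreal (1 / (2 * (1 + s^2))) * I * indicator {0..} s" by simp
  qed
  also have "\<dots> = I * (\<integral>\<^sup>+s. ennreal (1 / (2 * (1 + s^2))) * indicator {0..} s \<partial>lborel)"
    by (subst nn_integral_cmult[symmetric]) (auto intro!: nn_integral_cong simp: mult_ac)
  also have "(\<integral>\<^sup>+s. ennreal (1 / (2 * (1 + s^2))) * indicator {0..} s \<partial>lborel) =
     ennreal (1/2) * (\<integral>\<^sup>+s. ennreal (1 / (1 + s^2)) * indicator {0..} s \<partial>lborel)"
  proof (subst nn_integral_cmult[symmetric], simp, intro nn_integral_cong)
    fix x :: real
    have "ennreal (1 / (2 * (1 + x^2))) = ennreal (1/2) * ennreal (1 / (1 + x^2))"
      by (subst ennreal_mult[symmetric]) (auto simp: add_nonneg_eq_0_iff)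
    then show "ennreal (1 / (2 * (1 + x^2))) * indicator {0..} x =
      ennreal (1/2) * (ennreal (1 / (1 + x^2)) * indicator {0..} x)" by (simp only: mult.assoc)
  qed
  also have "\<dots> = ennreal (pi / 4)"
  proof -
    have "ennreal (1/2) * ennreal (pi / 2) = ennreal (1/2 * (pi/2))"
      by (subst ennreal_mult[symmetric]) auto
    then show ?thesis by (simp only: nn_arctan) simp
  qed
  finally have "(\<integral>\<^sup>+z. ennreal (f ((cmod z)^2)) \<partial>(lborel::complex measure)) = 2 * (2 * (I * ennreal (pi/4)))" .
  also have "\<dots> = ennreal pi * I"
    by (simp add: mult_ac ennreal_mult'[symmetric] ennreal_numeral[symmetric] del: ennreal_numeral)
  finally show ?thesis unfolding I_def .
qed

lemma fact_div_fact_choose: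
  "fact (n + i) / fact i = (fact n :: real) * real ((n + i) choose i)"
proof -
  have "real ((n + i) choose i) = fact (n + i) / (fact i * fact n)"
    by (subst binomial_fact) auto
  then show ?thesis by (simp add: field_simps)
qed

lemma lag_inner:
  fixes m \<alpha> l :: nat
  assumes "l \<le> m"
  shows "(\<Sum>i\<le>m. (-1)^i * real ((m+\<alpha>) choose (m-i)) * (fact (\<alpha>+i+l) / fact i)) =
         (if l = m then (-1)^m * fact (\<alpha>+m) else 0)"
proof -
  have "(\<Sum>i\<le>m. (-1)^i * real ((m+\<alpha>) choose (m-i)) * (fact (\<alpha>+i+l) / fact i)) =
        fact (\<alpha>+l) * (\<Sum>i\<le>m. ((- of_nat (\<alpha>+l+1)) gchoose i) * (of_nat (m+\<alpha>) gchoose (m-i)))"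
  proof -
    have "(-1)^i * real ((m+\<alpha>) choose (m-i)) * (fact (\<alpha>+i+l) / fact i) =
      fact (\<alpha>+l) * (((- of_nat (\<alpha>+l+1)) gchoose i) * (of_nat (m+\<alpha>) gchoose (m-i)))" for i
    proof -
      have "fact (\<alpha>+i+l) / fact i = (fact (\<alpha>+l) :: real) * real ((\<alpha>+l + i) choose i)"
        using fact_div_fact_choose[of "\<alpha>+l" i] by (simp add: ac_simps)
      moreover have "(- of_nat (\<alpha>+l+1) :: real) gchoose i = (-1)^i * real ((\<alpha>+l + i) choose i)"
        by (subst gbinomial_minus) (simp add: binomial_gbinomial add_ac)
      moreover have "(of_nat (m+\<alpha>) :: real) gchoose (m-i) = real ((m+\<alpha>) choose (m-i))"
        by (simp add: binomial_gbinomial)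
      ultimately show ?thesis by simp
    qed
    then show ?thesis by (simp add: sum_distrib_left)
  qed
  also have "(\<Sum>i\<le>m. ((- of_nat (\<alpha>+l+1)) gchoose i) * (of_nat (m+\<alpha>) gchoose (m-i))) =
      ((- of_nat (\<alpha>+l+1) + of_nat (m+\<alpha>)) :: real) gchoose m"
    using gbinomial_Vandermonde[of "- of_nat (\<alpha>+l+1) :: real" "of_nat (m+\<alpha>)" m]
    by (simp add: atLeast0AtMost)
  also have "(- of_nat (\<alpha>+l+1) + of_nat (m+\<alpha>) :: real) = of_nat (m - l) - 1"
    using assms by simp
  finally have eq: "(\<Sum>i\<le>m. (-1)^i * real ((m+\<alpha>) choose (m-i)) * (fact (\<alpha>+i+l) / fact i)) =
      fact (\<alpha>+l) * ((of_nat (m - l) - 1 :: real) gchoose m)" .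
  show ?thesis
  proof (cases "l = m")
    case True
    have "((of_nat (m - l) - 1 :: real) gchoose m) = (- 1) gchoose m" using True by simp
    also have "\<dots> = (-1)^m"
      using gbinomial_minus[of "1::real" m] by (simp add: binomial_gbinomial[symmetric])
    finally show ?thesis using eq True by (simp add: add.commute)
  next
    case False
    then have "m - l \<ge> 1" using assms by simp
    then have "(of_nat (m - l) - 1 :: real) = of_nat (m - l - 1)" by (simp add: of_nat_diff)
    moreover have "(m - l - 1) choose m = 0" using False assms by simp
    ultimately have "((of_nat (m - l) - 1 :: real) gchoose m) = 0"
      by (metis binomial_gbinomial of_nat_0)
    then show ?thesis using eq False by simp
  qed
qed

lemma lag_comb:
  fixes m \<alpha> :: nat
  shows "(\<Sum>i\<le>m. \<Sum>l\<le>m. (-1)^(i+l) * real ((m+\<alpha>) choose (m-i)) * real ((m+\<alpha>) choose (m-l))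
            * fact (\<alpha>+i+l) / (fact i * fact l)) = fact (m+\<alpha>) / fact m"
proof -
  have "(\<Sum>i\<le>m. \<Sum>l\<le>m. (-1)^(i+l) * real ((m+\<alpha>) choose (m-i)) * real ((m+\<alpha>) choose (m-l))
            * fact (\<alpha>+i+l) / (fact i * fact l)) =
     (\<Sum>l\<le>m. ((-1)^l * real ((m+\<alpha>) choose (m-l)) / fact l) *
        (\<Sum>i\<le>m. (-1)^i * real ((m+\<alpha>) choose (m-i)) * (fact (\<alpha>+i+l) / fact i)))"
    by (subst sum.swap) (auto simp: sum_distrib_left power_add intro!: sum.cong simp: field_simps)
  also have "\<dots> = (\<Sum>l\<le>m. ((-1)^l * real ((m+\<alpha>) choose (m-l)) / fact l) *
        (if l = m then (-1)^m * fact (\<alpha>+m) else 0))"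
    by (intro sum.cong refl, subst lag_inner) auto
  also have "\<dots> = ((-1)^m * real ((m+\<alpha>) choose (m-m)) / fact m) * ((-1)^m * fact (\<alpha>+m))"
    by (simp add: if_distrib sum.delta cong: if_cong)
  also have "\<dots> = fact (m+\<alpha>) / fact m"
    by (simp add: add.commute power_mult_distrib[symmetric])
  finally show ?thesis .
qed

lemma measurable_cnj[measurable (raw)]:
  "f \<in> borel_measurable M \<Longrightarrow> (\<lambda>x. cnj (f x)) \<in> borel_measurable M"
  by (simp add: borel_measurable_complex_iff)

lemma pi_powr_half_sq: "(pi powr (real n / 2))^2 = pi ^ n"
proof -
  have "(pi powr (real n / 2))^2 = pi powr (real n / 2 * 2)"
    by (simp add: powr_powr[symmetric] powr_realpow[symmetric] power2_eq_square powr_add[symmetric])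
  also have "\<dots> = pi ^ n" by (simp add: powr_realpow)
  finally show ?thesis .
qed

lemma cHermite_norm2:
  "(cmod (cHermite j r z))^2 = fact (min j r) / fact (max j r) * (pi * (cmod z)^2)^(max j r - min j r)
      * (laguerre (min j r) (max j r - min j r) (pi*(cmod z)^2))^2"
proof (cases "j > r")
  case True
  then have mm: "min j r = r" "max j r = j" by auto
  have "(cmod (cHermite j r z))^2 = (sqrt (fact r / fact j) * pi powr (real (j - r) / 2)
          * laguerre r (j - r) (pi * (cmod z)^2))^2 * ((cmod z)^(j-r))^2"
    using True by (simp add: cHermite_def norm_mult norm_power power_mult_distrib)
  also have "\<dots> = fact r / fact j * (pi powr (real (j - r) / 2))^2 * ((cmod z)^(j-r))^2
          * (laguerre r (j - r) (pi * (cmod z)^2))^2"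
    by (simp add: power_mult_distrib)
  also have "\<dots> = fact r / fact j * (pi * (cmod z)^2)^(j - r) * (laguerre r (j - r) (pi * (cmod z)^2))^2"
    by (simp add: pi_powr_half_sq power_mult_distrib power_mult[symmetric] mult.commute[of 2])
  finally show ?thesis by (simp add: mm)
next
  case False
  then have mm: "min j r = j" "max j r = r" by auto
  have "(cmod (cHermite j r z))^2 = (sqrt (fact j / fact r) * pi powr (real (r - j) / 2)
          * laguerre j (r - j) (pi * (cmod z)^2))^2 * ((cmod z)^(r-j))^2"
    using False by (simp add: cHermite_def norm_mult norm_power power_mult_distrib)
  also have "\<dots> = fact j / fact r * (pi powr (real (r - j) / 2))^2 * ((cmod z)^(r-j))^2
          * (laguerre j (r - j) (pi * (cmod z)^2))^2"
    by (simp add: power_mult_distrib)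
  also have "\<dots> = fact j / fact r * (pi * (cmod z)^2)^(r - j) * (laguerre j (r - j) (pi * (cmod z)^2))^2"
    by (simp add: pi_powr_half_sq power_mult_distrib power_mult[symmetric] mult.commute[of 2])
  finally show ?thesis by (simp add: mm)
qed

lemma I0i_power_exp: "has_bochner_integral lborel (\<lambda>x. x^k * exp (-x) * indicator {0 ..} x::real) (fact k)"
  using nn_intergal_power_times_exp_Ici[of k]
  by (intro has_bochner_integral_nn_integral)
     (auto simp: nn_integral_set_ennreal split: split_indicator)

definition lagQ :: "nat \<Rightarrow> nat \<Rightarrow> real \<Rightarrow> real" where
  "lagQ m \<alpha> t = fact m / fact (m+\<alpha>) * t^\<alpha> * (laguerre m \<alpha> t)^2 * exp (-t)"

lemma lagQ_integral: "has_bochner_integral lborel (\<lambda>t. lagQ m \<alpha> t * indicator {0..} t) 1"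
proof -
  define a where "a i = (-1)^i * real ((m+\<alpha>) choose (m-i)) / fact i" for i
  define c where "c = (fact m / fact (m+\<alpha>) :: real)"
  have lag: "laguerre m \<alpha> t = (\<Sum>i\<le>m. a i * t^i)" for t
    unfolding laguerre_def a_def by (intro sum.cong) auto
  have eq: "lagQ m \<alpha> t * indicator {0..} t =
     (\<Sum>i\<le>m. \<Sum>l\<le>m. (c * a i * a l) * (t^(\<alpha>+i+l) * exp (-t) * indicator {0..} t))" for t
  proof -
    have "(laguerre m \<alpha> t)^2 = (\<Sum>i\<le>m. \<Sum>l\<le>m. a i * a l * t^(i+l))"
      unfolding lag power2_eq_square sum_product by (simp add: power_add mult_ac)
    then show ?thesis
      unfolding lagQ_def c_def
      by (simp add: sum_distrib_left sum_distrib_right power_add mult_ac)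
  qed
  have "has_bochner_integral lborel (\<lambda>t. \<Sum>i\<le>m. \<Sum>l\<le>m. (c * a i * a l) * (t^(\<alpha>+i+l) * exp (-t) * indicator {0..} t))
      (\<Sum>i\<le>m. \<Sum>l\<le>m. (c * a i * a l) * fact (\<alpha>+i+l))"
    by (intro has_bochner_integral_sum has_bochner_integral_mult_right I0i_power_exp)
  moreover have "(\<Sum>i\<le>m. \<Sum>l\<le>m. (c * a i * a l) * fact (\<alpha>+i+l)) = (1::real)"
  proof -
    have "(\<Sum>i\<le>m. \<Sum>l\<le>m. (c * a i * a l) * fact (\<alpha>+i+l)) =
       c * (\<Sum>i\<le>m. \<Sum>l\<le>m. (-1)^(i+l) * real ((m+\<alpha>) choose (m-i)) * real ((m+\<alpha>) choose (m-l))
            * fact (\<alpha>+i+l) / (fact i * fact l))"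
      unfolding sum_distrib_left a_def by (intro sum.cong refl) (simp add: power_add field_simps)
    also have "\<dots> = 1" unfolding lag_comb c_def by simp
    finally show ?thesis .
  qed
  ultimately show ?thesis by (simp add: eq)
qed

definition phi :: "nat \<Rightarrow> nat \<Rightarrow> complex \<Rightarrow> complex" where
  "phi r j z = complex_of_real (exp (- pi / 2 * (cmod z)^2)) * cHermite j r z"

lemma continuous_phi: "continuous_on UNIV (phi r j)"
  unfolding phi_def cHermite_def laguerre_def
  by (cases "r < j") (simp_all add: continuous_on_cnj continuous_intros)

lemma phi_measurable[measurable]: "phi r j \<in> borel_measurable borel"
  by (rule borel_measurable_continuous_onI[OF continuous_phi])

lemma phi_norm2: "(cmod (phi r j z))^2 = lagQ (min j r) (max j r - min j r) (pi * (cmod z)^2)"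
proof -
  have "(cmod (phi r j z))^2 = (exp (- pi / 2 * (cmod z)^2))^2 * (cmod (cHermite j r z))^2"
    by (simp add: phi_def norm_mult power_mult_distrib)
  also have "(exp (- pi / 2 * (cmod z)^2))^2 = exp (- (pi * (cmod z)^2))"
    by (simp add: power2_eq_square exp_add[symmetric])
  moreover have "min j r + (max j r - min j r) = max j r" by simp
  ultimately show ?thesis
    by (simp add: cHermite_norm2 lagQ_def)
qed

lemma lagQ_nonneg: "t \<ge> 0 \<Longrightarrow> lagQ m \<alpha> t \<ge> 0"
  unfolding lagQ_def by (intro mult_nonneg_nonneg) auto

lemma phi_norm2_integral: "has_bochner_integral lborel (\<lambda>z. (cmod (phi r j z))^2) 1"
proof -
  define m where "m = min j r"
  define \<alpha> where "\<alpha> = max j r - min j r"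
  define f where "f s = lagQ m \<alpha> (pi * \<bar>s\<bar>)" for s
  have fm[measurable]: "f \<in> borel_measurable borel"
    unfolding f_def lagQ_def laguerre_def by measurable
  have fn: "f s \<ge> 0" for s unfolding f_def by (rule lagQ_nonneg) simp
  have lQm[measurable]: "(\<lambda>t. lagQ m \<alpha> t) \<in> borel_measurable borel"
    unfolding lagQ_def laguerre_def by measurable
  have "(\<integral>\<^sup>+z. ennreal ((cmod (phi r j z))^2) \<partial>lborel) = (\<integral>\<^sup>+z. ennreal (f ((cmod z)^2)) \<partial>lborel)"
    by (intro nn_integral_cong) (simp add: phi_norm2 f_def m_def \<alpha>_def)
  also have "\<dots> = ennreal pi * (\<integral>\<^sup>+s. ennreal (f s) * indicator {0..} s \<partial>lborel)"
    by (rule radial[OF fm fn])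
  also have "\<dots> = (\<integral>\<^sup>+t. ennreal (lagQ m \<alpha> t * indicator {0..} t) \<partial>lborel)"
  proof -
    have "(\<integral>\<^sup>+t. ennreal (lagQ m \<alpha> t * indicator {0..} t) \<partial>lborel) =
       ennreal \<bar>pi\<bar> * (\<integral>\<^sup>+x. ennreal (lagQ m \<alpha> (0 + pi * x) * indicator {0..} (0 + pi * x)) \<partial>lborel)"
      by (rule nn_integral_real_affine) auto
    also have "\<dots> = ennreal pi * (\<integral>\<^sup>+s. ennreal (f s) * indicator {0..} s \<partial>lborel)"
    proof -
      have "ennreal (lagQ m \<alpha> (0 + pi * x) * indicator {0..} (0 + pi * x)) = ennreal (f x) * indicator {0..} x" for x
        using pi_gt_zero by (cases "x \<ge> 0") (auto simp: f_def zero_le_mult_iff not_le split: split_indicator)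
      then show ?thesis by simp
    qed
    finally show ?thesis by simp
  qed
  also have "\<dots> = ennreal 1"
  proof -
    have "(\<integral>\<^sup>+t. ennreal (lagQ m \<alpha> t * indicator {0..} t) \<partial>lborel) = ennreal (LINT t|lborel. lagQ m \<alpha> t * indicator {0..} t)"
      using lagQ_integral[of m \<alpha>]
      by (intro nn_integral_eq_integral) (auto simp: has_bochner_integral_iff lagQ_nonneg split: split_indicator)
    then show ?thesis using lagQ_integral[of m \<alpha>] by (simp add: has_bochner_integral_iff)
  qed
  finally show ?thesis
    by (intro has_bochner_integral_nn_integral) auto
qed

lemma unit_cnj: "cmod u = 1 \<Longrightarrow> u * cnj u = 1"
  using complex_norm_square[of u] by simp

lemma phi_rot:
  assumes u: "cmod u = 1"
  shows "phi r j (u*z) = u^j * cnj u ^ r * phi r j z"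
proof -
  have uc: "u * cnj u = 1" using unit_cnj[OF u] .
  have nz: "cmod (u*z) = cmod z" using u by (simp add: norm_mult)
  show ?thesis
  proof (cases "j > r")
    case True
    have "u^j * cnj u ^ r = u^(j-r)"
    proof -
      have "u^j = u^(j-r) * u^r" using True by (simp add: power_add[symmetric])
      then have "u^j * cnj u ^ r = u^(j-r) * (u * cnj u)^r" by (simp add: power_mult_distrib)
      then show ?thesis by (simp add: uc)
    qed
    then show ?thesis using True
      by (simp add: phi_def cHermite_def nz power_mult_distrib)
  next
    case False
    have "u^j * cnj u ^ r = cnj u^(r-j)"
    proof -
      have "cnj u^r = cnj u^(r-j) * cnj u^j" using False by (simp add: power_add[symmetric])
      then have "u^j * cnj u ^ r = cnj u^(r-j) * (u * cnj u)^j" by (simp add: power_mult_distrib)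
      then show ?thesis by (simp add: uc)
    qed
    then show ?thesis using False
      by (simp add: phi_def cHermite_def nz power_mult_distrib)
  qed
qed

lemma rot_inner_zero:
  fixes f :: "complex \<Rightarrow> complex" and c :: complex
  assumes fm[measurable]: "f \<in> borel_measurable borel"
    and rot: "\<And>z. f (u * z) = c * f z" and u: "cmod u = 1" "u \<noteq> -1" and c: "c \<noteq> 1"
  shows "(LINT z|lborel. f z) = 0"
proof -
  have "(LINT z|lborel. f z) = (LINT z|lborel. f (u * z))"
    using integral_rotate[OF u fm] by simp
  also have "\<dots> = c * (LINT z|lborel. f z)" by (simp add: rot)
  finally show ?thesis using c by (metis mult_cancel_right2)
qed

lemma cis_pow_i: "d \<ge> 1 \<Longrightarrow> (cis (pi / (2 * real d)))^d = \<i>"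
proof -
  assume d: "d \<ge> 1"
  have "(cis (pi / (2 * real d)))^d = cis (real d * (pi / (2 * real d)))" by (rule Complex.DeMoivre)
  also have "real d * (pi / (2 * real d)) = pi / 2" using d by (simp add: field_simps)
  finally show ?thesis by (simp add: complex_eq_iff)
qed

lemma cis_small_ne: "d \<ge> 1 \<Longrightarrow> cis (pi / (2 * real d)) \<noteq> -1"
proof
  assume d: "d \<ge> 1" and e: "cis (pi / (2 * real d)) = -1"
  have "0 \<le> pi / (2 * real d)" "pi / (2 * real d) \<le> pi / 2"
    using d by (auto simp: field_simps)
  moreover have "- (pi / 2) \<le> 0" by simp
  ultimately have "cos (pi / (2 * real d)) \<ge> 0" by (intro cos_ge_zero) linarith+
  moreover have "cos (pi / (2 * real d)) = -1" using arg_cong[OF e, of Re] by simp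
  ultimately show False by simp
qed

lemma phi_orth_weighted:
  fixes w :: "complex \<Rightarrow> real"
  assumes wm[measurable]: "w \<in> borel_measurable borel" and wr: "\<And>u z. cmod u = 1 \<Longrightarrow> w (u * z) = w z"
    and jk: "j \<noteq> k"
  shows "(LINT z|lborel. w z * (phi r j z * cnj (phi r k z))) = 0"
proof -
  define d where "d = (if j > k then j - k else k - j)"
  have d1: "d \<ge> 1" using jk by (auto simp: d_def)
  define u where "u = cis (pi / (2 * real d))"
  have u: "cmod u = 1" "u \<noteq> -1" using cis_small_ne[OF d1] by (auto simp: u_def)
  have uc: "u * cnj u = 1" using unit_cnj[OF u(1)] .
  have ud: "u^d = \<i>" using cis_pow_i[OF d1] by (simp add: u_def)
  define c where "c = u^j * cnj u^k"
  have c: "c \<noteq> 1"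
  proof (cases "j > k")
    case True
    have "u^j = u^d * u^k" using True by (simp add: d_def power_add[symmetric])
    then have "c = u^d * (u * cnj u)^k" by (simp add: c_def power_mult_distrib)
    then have "c = \<i>" by (simp add: uc ud)
    then show ?thesis by simp
  next
    case False
    have "cnj u^k = cnj u^d * cnj u^j" using False jk by (simp add: d_def power_add[symmetric])
    then have "c = cnj (u^d) * (u * cnj u)^j" by (simp add: c_def power_mult_distrib)
    then have "c = - \<i>" by (simp add: uc ud)
    then show ?thesis by (simp add: complex_eq_iff)
  qed
  show ?thesis
  proof (rule rot_inner_zero[OF _ _ u c])
    fix z
    have "w (u * z) * (phi r j (u * z) * cnj (phi r k (u * z))) =
       w z * ((u^j * cnj u^k) * (u * cnj u)^r * (phi r j z * cnj (phi r k z)))"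
      by (simp add: wr[OF u(1)] phi_rot[OF u(1)] power_mult_distrib mult_ac)
    then show "w (u * z) * (phi r j (u * z) * cnj (phi r k (u * z))) = c * (w z * (phi r j z * cnj (phi r k z)))"
      by (simp add: uc c_def mult_ac)
  qed measurable
qed

lemma summable_pow_sqrt_fact:
  fixes a :: real assumes a: "a \<ge> 0"
  shows "summable (\<lambda>j. a^j / sqrt (fact j))"
proof (rule summable_comparison_test')
  show "summable (\<lambda>j. (inverse (fact j) * (2*a^2)^j + (1/2)^j) / 2)"
    by (intro summable_divide summable_add summable_exp summable_geometric) simp
  fix j :: nat
  have p: "inverse (fact j) * (2*a^2)^j \<ge> (0::real)" by simp
  have q: "(1/2::real)^j \<ge> 0" by simp
  have e1: "(2*a^2)^j * (1/2::real)^j = (a^2)^j"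
    by (simp only: power_mult_distrib[symmetric]) simp
  have e2: "(a^2)^j = (a^j)^2"
    by (simp only: power_mult[symmetric] mult.commute)
  have "(inverse (fact j) * (2*a^2)^j) * (1/2::real)^j = inverse (fact j) * ((2*a^2)^j * (1/2::real)^j)"
    by (simp only: mult.assoc)
  also have "\<dots> = inverse (fact j) * (a^j)^2" by (simp only: e1 e2)
  also have "\<dots> = (a^j)^2 / fact j" by (simp add: divide_inverse)
  finally have pq: "(inverse (fact j) * (2*a^2)^j) * (1/2::real)^j = (a^j)^2 / fact j" .
  from pq have "sqrt ((inverse (fact j) * (2*a^2)^j) * (1/2::real)^j) = a^j / sqrt (fact j)"
    using a by (simp add: real_sqrt_divide)
  moreover have "sqrt ((inverse (fact j) * (2*a^2)^j) * (1/2::real)^j) \<le> (inverse (fact j) * (2*a^2)^j + (1/2)^j) / 2"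
    by (rule arith_geo_mean_sqrt[OF p q])
  ultimately show "norm (a^j / sqrt (fact j)) \<le> (inverse (fact j) * (2*a^2)^j + (1/2)^j) / 2"
    using a by (simp del: real_sqrt_le_iff)
qed

lemma laguerre_bound: "\<bar>laguerre m \<alpha> x\<bar> \<le> (m+1) * 2^(m+\<alpha>) * (1+\<bar>x\<bar>)^m"
proof -
  have "\<bar>laguerre m \<alpha> x\<bar> \<le> (\<Sum>i\<le>m. \<bar>(-1)^i * real ((m + \<alpha>) choose (m - i)) * x ^ i / fact i\<bar>)"
    unfolding laguerre_def by (rule sum_abs)
  also have "\<dots> \<le> (\<Sum>i\<le>m. 2^(m+\<alpha>) * (1+\<bar>x\<bar>)^m)"
  proof (rule sum_mono)
    fix i assume i: "i \<in> {..m}"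
    have c: "real ((m + \<alpha>) choose (m - i)) \<le> 2^(m+\<alpha>)"
      using binomial_le_pow2[of "m+\<alpha>" "m-i"] by (metis of_nat_le_iff of_nat_numeral of_nat_power)
    have "\<bar>x\<bar>^i / fact i \<le> \<bar>x\<bar>^i / 1"
      by (rule divide_left_mono) (auto simp: fact_ge_1)
    then have "\<bar>x\<bar>^i / fact i \<le> \<bar>x\<bar>^i" by simp
    also have "\<dots> \<le> (1+\<bar>x\<bar>)^i" by (intro power_mono) auto
    also have "\<dots> \<le> (1+\<bar>x\<bar>)^m" using i by (intro power_increasing) auto
    finally have xi: "\<bar>x\<bar>^i / fact i \<le> (1+\<bar>x\<bar>)^m" .
    have "\<bar>(-1)^i * real ((m + \<alpha>) choose (m - i)) * x ^ i / fact i\<bar> =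
       real ((m + \<alpha>) choose (m - i)) * (\<bar>x\<bar>^i / fact i)"
      by (simp add: abs_mult power_abs)
    also have "\<dots> \<le> 2^(m+\<alpha>) * (1+\<bar>x\<bar>)^m"
      by (intro mult_mono c xi) auto
    finally show "\<bar>(-1)^i * real ((m + \<alpha>) choose (m - i)) * x ^ i / fact i\<bar> \<le> 2^(m+\<alpha>) * (1+\<bar>x\<bar>)^m" .
  qed
  also have "\<dots> = (real m + 1) * 2^(m+\<alpha>) * (1+\<bar>x\<bar>)^m" by (simp add: algebra_simps)
  finally show ?thesis .
qed

lemma pi_powr_half: "pi powr (real n / 2) = sqrt pi ^ n"
proof -
  have "sqrt pi ^ n = (pi powr (1/2)) ^ n" by (simp add: powr_half_sqrt)
  also have "\<dots> = pi powr (real n * (1/2))" by (rule powr_power) simp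
  finally show ?thesis by simp
qed

lemma cHermite_bound:
  assumes jr: "j > r"
  shows "cmod (cHermite j r z) \<le> (sqrt (fact r) * (real r+1) * (1 + pi*(cmod z)^2)^r) *
            ((2*(1 + sqrt pi * cmod z))^j / sqrt (fact j))"
proof -
  define x where "x = pi * (cmod z)^2"
  define s where "s = sqrt pi * cmod z"
  have x0: "x \<ge> 0" unfolding x_def by simp
  have s0: "s \<ge> 0" unfolding s_def by simp
  have "cmod (cHermite j r z) = sqrt (fact r / fact j) * (pi powr (real (j - r) / 2) * (cmod z)^(j-r))
      * \<bar>laguerre r (j - r) x\<bar>"
    using jr by (simp add: cHermite_def norm_mult norm_power abs_mult x_def)
  also have "pi powr (real (j - r) / 2) * (cmod z)^(j-r) = s^(j-r)"
    by (simp add: pi_powr_half s_def power_mult_distrib)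
  also have "sqrt (fact r / fact j) = sqrt (fact r) / sqrt (fact j)"
    by (simp add: real_sqrt_divide)
  also have "sqrt (fact r) / sqrt (fact j) * s^(j-r) * \<bar>laguerre r (j - r) x\<bar> \<le>
      sqrt (fact r) / sqrt (fact j) * (1+s)^j * ((real r + 1) * 2^j * (1+x)^r)"
  proof (intro mult_mono)
    have "s^(j-r) \<le> (1+s)^(j-r)" using s0 by (intro power_mono) auto
    also have "\<dots> \<le> (1+s)^j" using s0 by (intro power_increasing) auto
    finally show "s^(j-r) \<le> (1+s)^j" .
    have "\<bar>laguerre r (j - r) x\<bar> \<le> (real r + 1) * 2^(r + (j-r)) * (1+\<bar>x\<bar>)^r"
      using laguerre_bound[of r "j-r" x] by simp
    then show "\<bar>laguerre r (j - r) x\<bar> \<le> (real r + 1) * 2^j * (1+x)^r"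
      using jr x0 by simp
  qed (use s0 in auto)
  also have "\<dots> = (sqrt (fact r) * (real r+1) * (1 + x)^r) * ((2*(1 + s))^j / sqrt (fact j))"
  proof -
    have "(2*(1 + s))^j = 2^j * (1+s)^j" by (rule power_mult_distrib)
    then show ?thesis by (simp add: divide_inverse mult_ac)
  qed
  finally show ?thesis by (simp add: x_def s_def)
qed

lemma cmod_phi_le: "cmod (phi r j z) \<le> cmod (cHermite j r z)"
proof -
  have "exp (- pi / 2 * (cmod z)^2) \<le> 1" by simp
  then show ?thesis unfolding phi_def norm_mult
    by (simp add: mult_left_le_one_le)
qed

lemma summable_phi: "summable (\<lambda>j. cmod (phi r j z))"
proof (rule summable_comparison_test'[where N="Suc r"])
  show "summable (\<lambda>j. (sqrt (fact r) * (real r+1) * (1 + pi*(cmod z)^2)^r) *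
            ((2*(1 + sqrt pi * cmod z))^j / sqrt (fact j)))"
    by (intro summable_mult summable_pow_sqrt_fact) simp
  fix j assume "Suc r \<le> j"
  then have "j > r" by simp
  then show "norm (cmod (phi r j z)) \<le> (sqrt (fact r) * (real r+1) * (1 + pi*(cmod z)^2)^r) *
            ((2*(1 + sqrt pi * cmod z))^j / sqrt (fact j))"
    using cmod_phi_le[of r j z] cHermite_bound[of r j z] by simp
qed

lemma L2_D: "f \<in> L2 \<Longrightarrow> f \<in> borel_measurable lborel" "f \<in> L2 \<Longrightarrow> integrable lborel (\<lambda>z. (cmod (f z))^2)"
  by (auto simp: L2_def)

lemma L2_I: "f \<in> borel_measurable lborel \<Longrightarrow> integrable lborel (\<lambda>z. (cmod (f z))^2) \<Longrightarrow> f \<in> L2"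
  by (auto simp: L2_def)

lemma prod_le_sq: "a * b \<le> (a^2 + b^2 :: real)"
proof -
  have "0 \<le> (a - b)^2" by simp
  moreover have "0 \<le> a^2" "0 \<le> b^2" by simp_all
  ultimately show ?thesis unfolding power2_diff by linarith
qed

lemma prod_le_sq2: "2 * a * b \<le> (a^2 + b^2 :: real)"
proof -
  have "0 \<le> (a - b)^2" by simp
  then show ?thesis unfolding power2_diff by linarith
qed

lemma L2_prod_integrable:
  assumes f: "f \<in> L2" and g: "g \<in> L2"
  shows "integrable lborel (\<lambda>z. f z * cnj (g z))"
proof (rule Bochner_Integration.integrable_bound[where f="\<lambda>z. (cmod (f z))^2 + (cmod (g z))^2"])
  show "integrable lborel (\<lambda>z. (cmod (f z))^2 + (cmod (g z))^2)"
    using L2_D[OF f] L2_D[OF g] by auto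
  show "(\<lambda>z. f z * cnj (g z)) \<in> borel_measurable lborel"
    using L2_D[OF f] L2_D[OF g] by measurable
  show "AE z in lborel. norm (f z * cnj (g z)) \<le> norm ((cmod (f z))^2 + (cmod (g z))^2)"
    by (auto simp: norm_mult prod_le_sq)
qed

lemma L2_normprod_integrable:
  assumes f: "f \<in> L2" and g: "g \<in> L2"
  shows "integrable lborel (\<lambda>z. cmod (f z) * cmod (g z))"
  using integrable_norm[OF L2_prod_integrable[OF f g]] by (simp add: norm_mult)

lemma L2_add: assumes f: "f \<in> L2" and g: "g \<in> L2" shows "(\<lambda>z. f z + g z) \<in> L2"
proof (rule L2_I)
  show "(\<lambda>z. f z + g z) \<in> borel_measurable lborel" using L2_D[OF f] L2_D[OF g] by measurable
  show "integrable lborel (\<lambda>z. (cmod (f z + g z))^2)"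
  proof (rule Bochner_Integration.integrable_bound[where f="\<lambda>z. 2 * (cmod (f z))^2 + 2 * (cmod (g z))^2"])
    show "integrable lborel (\<lambda>z. 2 * (cmod (f z))^2 + 2 * (cmod (g z))^2)"
      using L2_D[OF f] L2_D[OF g] by auto
    show "(\<lambda>z. (cmod (f z + g z))^2) \<in> borel_measurable lborel"
      using L2_D[OF f] L2_D[OF g] by measurable
    have "(cmod (f z + g z))^2 \<le> 2 * (cmod (f z))^2 + 2 * (cmod (g z))^2" for z
    proof -
      have "cmod (f z + g z) \<le> cmod (f z) + cmod (g z)" by (rule norm_triangle_ineq)
      then have "(cmod (f z + g z))^2 \<le> (cmod (f z) + cmod (g z))^2" by (intro power_mono) auto
      also have "\<dots> \<le> 2 * (cmod (f z))^2 + 2 * (cmod (g z))^2"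
        using prod_le_sq2[of "cmod (f z)" "cmod (g z)"] by (simp add: power2_sum)
      finally show ?thesis .
    qed
    then show "AE z in lborel. norm ((cmod (f z + g z))^2) \<le> norm (2 * (cmod (f z))^2 + 2 * (cmod (g z))^2)"
      by auto
  qed
qed

lemma L2_cmult: assumes f: "f \<in> L2" shows "(\<lambda>z. c * f z) \<in> L2"
proof (rule L2_I)
  show "(\<lambda>z. c * f z) \<in> borel_measurable lborel" using L2_D[OF f] by measurable
  show "integrable lborel (\<lambda>z. (cmod (c * f z))^2)"
    using L2_D(2)[OF f] by (simp add: norm_mult power_mult_distrib)
qed

lemma L2_zero: "(\<lambda>z. 0) \<in> L2" by (rule L2_I) auto

lemma L2_diff: assumes f: "f \<in> L2" and g: "g \<in> L2" shows "(\<lambda>z. f z - g z) \<in> L2"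
  using L2_add[OF f L2_cmult[OF g, of "-1"]] by simp

lemma L2_sum: assumes "\<And>j. j \<in> S \<Longrightarrow> f j \<in> L2" shows "(\<lambda>z. \<Sum>j\<in>S. f j z) \<in> L2"
  using assms
proof (induction S rule: infinite_finite_induct)
  case (infinite A) then show ?case by (simp add: L2_zero)
next
  case empty then show ?case by (simp add: L2_zero)
next
  case (insert x F)
  then show ?case by (simp add: L2_add)
qed

lemma L2_inner_self: "f \<in> L2 \<Longrightarrow> L2_inner f f = complex_of_real (LINT z|lborel. (cmod (f z))^2)"
  unfolding L2_inner_def
  by (subst integral_complex_of_real[symmetric]) (simp only: complex_norm_square)

lemma L2_inner_sum_left:
  assumes "\<And>j. j \<in> S \<Longrightarrow> f j \<in> L2" and h: "h \<in> L2"
  shows "L2_inner (\<lambda>z. \<Sum>j\<in>S. c j * f j z) h = (\<Sum>j\<in>S. c j * L2_inner (f j) h)"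
proof -
  have "L2_inner (\<lambda>z. \<Sum>j\<in>S. c j * f j z) h = (LINT z|lborel. (\<Sum>j\<in>S. c j * (f j z * cnj (h z))))"
    unfolding L2_inner_def by (simp add: sum_distrib_right mult.assoc)
  also have "\<dots> = (\<Sum>j\<in>S. LINT z|lborel. c j * (f j z * cnj (h z)))"
    by (rule Bochner_Integration.integral_sum) (use assms L2_prod_integrable in auto)
  also have "\<dots> = (\<Sum>j\<in>S. c j * L2_inner (f j) h)"
    unfolding L2_inner_def by simp
  finally show ?thesis .
qed

lemma L2_inner_cnj: "L2_inner g f = cnj (L2_inner f g)"
proof -
  have "(\<lambda>z. g z * cnj (f z)) = (\<lambda>z. cnj (f z * cnj (g z)))" by (simp add: fun_eq_iff mult.commute)
  then show ?thesis unfolding L2_inner_def by (simp only: Bochner_Integration.integral_cnj)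
qed

lemma L2_inner_sum_right:
  assumes "\<And>j. j \<in> S \<Longrightarrow> f j \<in> L2" and h: "h \<in> L2"
  shows "L2_inner h (\<lambda>z. \<Sum>j\<in>S. c j * f j z) = (\<Sum>j\<in>S. cnj (c j) * L2_inner h (f j))"
proof -
  have "L2_inner h (\<lambda>z. \<Sum>j\<in>S. c j * f j z) = cnj (L2_inner (\<lambda>z. \<Sum>j\<in>S. c j * f j z) h)"
    by (rule L2_inner_cnj)
  also have "\<dots> = cnj (\<Sum>j\<in>S. c j * L2_inner (f j) h)" by (simp only: L2_inner_sum_left[OF assms])
  also have "\<dots> = (\<Sum>j\<in>S. cnj (c j) * cnj (L2_inner (f j) h))" by simp
  also have "\<dots> = (\<Sum>j\<in>S. cnj (c j) * L2_inner h (f j))"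
    by (intro sum.cong refl) (simp only: L2_inner_cnj[of h])
  finally show ?thesis .
qed

lemma L2_inner_add_left:
  assumes "f \<in> L2" "g \<in> L2" "h \<in> L2"
  shows "L2_inner (\<lambda>z. f z + g z) h = L2_inner f h + L2_inner g h"
  unfolding L2_inner_def using L2_prod_integrable assms
  by (simp add: distrib_right)

lemma L2_inner_diff_left:
  assumes "f \<in> L2" "g \<in> L2" "h \<in> L2"
  shows "L2_inner (\<lambda>z. f z - g z) h = L2_inner f h - L2_inner g h"
  unfolding L2_inner_def using L2_prod_integrable assms
  by (simp add: left_diff_distrib)

lemma L2_inner_diff_right:
  assumes "f \<in> L2" "g \<in> L2" "h \<in> L2"
  shows "L2_inner h (\<lambda>z. f z - g z) = L2_inner h f - L2_inner h g"
  using L2_inner_diff_left[OF assms] L2_inner_cnj by (metis complex_cnj_diff)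

lemma phi_L2: "phi r j \<in> L2"
  using phi_norm2_integral[of r j] by (intro L2_I) (auto simp: has_bochner_integral_iff)

lemma phi_norm_int: "(LINT z|lborel. (cmod (phi r j z))^2) = 1"
  using phi_norm2_integral[of r j] by (simp add: has_bochner_integral_iff)

lemma phi_inner: "L2_inner (phi r j) (phi r k) = (if j = k then 1 else 0)"
proof (cases "j = k")
  case True
  then show ?thesis using L2_inner_self[OF phi_L2, of r k] phi_norm_int[of r k] by simp
next
  case False
  have "(LINT z|lborel. complex_of_real ((\<lambda>_. 1) z) * (phi r j z * cnj (phi r k z))) = 0"
    by (rule phi_orth_weighted[OF _ _ False]) auto
  then show ?thesis using False by (simp add: L2_inner_def)
qed

lemma phi_inner_on_ball: "j \<noteq> k \<Longrightarrow> L2_inner_on (ball 0 R) (phi r j) (phi r k) = 0"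
proof -
  assume jk: "j \<noteq> k"
  have A: "(LINT z|lborel. complex_of_real (indicator (ball 0 R) z) * (phi r j z * cnj (phi r k z))) = 0"
  proof (rule phi_orth_weighted[OF _ _ jk])
    fix u z :: complex assume "cmod u = 1"
    then show "indicator (ball 0 R) (u * z) = (indicator (ball 0 R) z :: real)"
      by (simp add: indicator_def norm_mult)
  qed (rule borel_measurable_indicator, simp)
  have B: "\<And>z. complex_of_real (indicator (ball 0 R) z) = indicator (ball 0 R) z"
    by (simp add: indicator_def)
  show ?thesis using A unfolding L2_inner_on_def B .
qed

lemma phi_inj: "inj (phi r)"
proof (rule injI)
  fix j k assume "phi r j = phi r k"
  then have "L2_inner (phi r j) (phi r k) = L2_inner (phi r k) (phi r k)" by simp
  then show "j = k" by (simp add: phi_inner split: if_splits)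
qed

lemma phi_not_AE_zero: "\<not> (AE z in lborel. phi r j z = 0)"
proof
  assume "AE z in lborel. phi r j z = 0"
  then have "AE z in lborel. (cmod (phi r j z))^2 = 0" by eventually_elim simp
  then have "(LINT z|lborel. (cmod (phi r j z))^2) = 0"
    by (rule integral_eq_zero_AE)
  then show False using phi_norm_int[of r j] by simp
qed

lemma summable_phi_prod: "summable (\<lambda>j. cmod (phi r j z) * cmod (phi r j w))"
proof -
  have "(\<lambda>j. cmod (phi r j w)) \<longlonglongrightarrow> 0" by (rule summable_LIMSEQ_zero[OF summable_phi])
  then have "eventually (\<lambda>j. cmod (phi r j w) < 1) sequentially"
    by (rule order_tendstoD(2)) simp
  then obtain N where N: "\<And>j. j \<ge> N \<Longrightarrow> cmod (phi r j w) < 1"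
    by (auto simp: eventually_sequentially)
  show ?thesis
  proof (rule summable_comparison_test'[OF summable_phi[of r z], where N=N])
    fix j assume "j \<ge> N"
    then have "cmod (phi r j w) \<le> 1" using N[of j] by simp
    then show "norm (cmod (phi r j z) * cmod (phi r j w)) \<le> cmod (phi r j z)"
      by (simp add: mult_left_le)
  qed
qed

definition kt :: "nat \<Rightarrow> nat set \<Rightarrow> complex \<Rightarrow> complex \<Rightarrow> nat \<Rightarrow> complex" where
  "kt r J z w j = (if j \<in> J then phi r j z * cnj (phi r j w) else 0)"

lemma summable_kt: "summable (\<lambda>j. cmod (kt r J z w j))"
  by (rule summable_comparison_test'[OF summable_phi_prod[of r z w], where N=0])
     (auto simp: kt_def norm_mult)

lemma infsum_restrict_suminf:
  fixes f :: "nat \<Rightarrow> complex"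
  assumes "summable (\<lambda>j. cmod (if j \<in> J then f j else 0))"
  shows "infsum f J = (\<Sum>j. if j \<in> J then f j else 0)"
proof -
  have "infsum f J = infsum (\<lambda>j. if j \<in> J then f j else 0) UNIV"
    by (rule infsum_cong_neutral) auto
  also have "\<dots> = (\<Sum>j. if j \<in> J then f j else 0)"
    by (rule infsumI, rule norm_summable_imp_has_sum[OF assms])
       (rule summable_sums, rule summable_norm_cancel[OF assms])
  finally show ?thesis .
qed

lemma kernelK_eq: "kernelK r J z w = (\<Sum>j. kt r J z w j)"
proof -
  have "kernelK r J z w = (\<Sum>\<^sub>\<infinity>j\<in>J. complex_of_real (exp (- pi / 2 * ((cmod z)^2 + (cmod w)^2)))
        * (cHermite j r z * cnj (cHermite j r w)))"
    unfolding kernelK_def by (rule infsum_cmult_right'[symmetric])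
  also have "\<dots> = (\<Sum>\<^sub>\<infinity>j\<in>J. phi r j z * cnj (phi r j w))"
  proof (rule infsum_cong)
    fix j
    have "exp (- pi / 2 * ((cmod z)^2 + (cmod w)^2)) = exp (- pi / 2 * (cmod z)^2) * exp (- pi / 2 * (cmod w)^2)"
      by (simp add: exp_add[symmetric] algebra_simps)
    then show "complex_of_real (exp (- pi / 2 * ((cmod z)^2 + (cmod w)^2))) * (cHermite j r z * cnj (cHermite j r w)) =
        phi r j z * cnj (phi r j w)"
      by (simp add: phi_def mult_ac)
  qed
  also have "\<dots> = (\<Sum>j. kt r J z w j)"
    unfolding kt_def by (rule infsum_restrict_suminf) (use summable_kt[of r J z w] in \<open>simp add: kt_def\<close>)
  finally show ?thesis .
qed

lemma L2_phi_bound: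
  assumes G: "G \<in> L2"
  shows "(LINT w|lborel. cmod (G w) * cmod (phi r j w)) \<le> (LINT w|lborel. (cmod (G w))^2) + 1"
proof -
  have "(LINT w|lborel. cmod (G w) * cmod (phi r j w)) \<le> (LINT w|lborel. (cmod (G w))^2 + (cmod (phi r j w))^2)"
    by (intro integral_mono L2_normprod_integrable[OF G phi_L2] Bochner_Integration.integrable_add
          L2_D(2)[OF G] L2_D(2)[OF phi_L2] prod_le_sq)
  also have "\<dots> = (LINT w|lborel. (cmod (G w))^2) + 1"
    using L2_D(2)[OF G] L2_D(2)[OF phi_L2] phi_norm_int by simp
  finally show ?thesis .
qed

lemma intop_sums:
  assumes G: "G \<in> L2"
  shows "(\<lambda>j. if j \<in> J then L2_inner G (phi r j) * phi r j z else 0) sums (intop (kernelK r J) G z)"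
proof -
  define f where "f j w = kt r J z w j * G w" for j w
  have Gm[measurable]: "G \<in> borel_measurable lborel" using L2_D(1)[OF G] .
  have int: "integrable lborel (f j)" for j
  proof (cases "j \<in> J")
    case True
    have "integrable lborel (\<lambda>w. phi r j z * (G w * cnj (phi r j w)))"
      by (intro integrable_mult_right L2_prod_integrable[OF G phi_L2])
    moreover have "f j = (\<lambda>w. phi r j z * (G w * cnj (phi r j w)))"
      using True by (auto simp: fun_eq_iff f_def kt_def mult_ac)
    ultimately show ?thesis by simp
  next
    case False
    then have "f j = (\<lambda>w. 0)" by (auto simp: fun_eq_iff f_def kt_def)
    then show ?thesis by simp
  qed
  have intf: "integral\<^sup>L lborel (f j) = (if j \<in> J then L2_inner G (phi r j) * phi r j z else 0)" for j
  proof (cases "j \<in> J")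
    case True
    have "integral\<^sup>L lborel (f j) = (LINT w|lborel. phi r j z * (G w * cnj (phi r j w)))"
      using True by (intro Bochner_Integration.integral_cong) (auto simp: f_def kt_def mult_ac)
    then show ?thesis using True by (simp add: L2_inner_def mult.commute)
  next
    case False
    then have "f j = (\<lambda>w. 0)" by (auto simp: fun_eq_iff f_def kt_def)
    then show ?thesis using False by simp
  qed
  have AEs: "AE w in lborel. summable (\<lambda>j. norm (f j w))"
  proof (rule AE_I2)
    fix w show "summable (\<lambda>j. norm (f j w))"
      unfolding f_def norm_mult by (rule summable_mult2[OF summable_kt])
  qed
  define C where "C = (LINT w|lborel. (cmod (G w))^2) + 1"
  have sint: "summable (\<lambda>j. (LINT w|lborel. norm (f j w)))"
  proof (rule summable_comparison_test'[OF summable_mult[OF summable_phi[of r z], of C], where N=0])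
    fix j :: nat
    have nn: "(LINT w|lborel. norm (f j w)) \<ge> 0" by simp
    have "(LINT w|lborel. norm (f j w)) \<le> C * cmod (phi r j z)"
    proof (cases "j \<in> J")
      case True
      have "(LINT w|lborel. norm (f j w)) = (LINT w|lborel. cmod (phi r j z) * (cmod (G w) * cmod (phi r j w)))"
        using True by (intro Bochner_Integration.integral_cong) (auto simp: f_def kt_def norm_mult mult_ac)
      also have "\<dots> = cmod (phi r j z) * (LINT w|lborel. cmod (G w) * cmod (phi r j w))" by simp
      also have "\<dots> \<le> cmod (phi r j z) * C"
        unfolding C_def by (intro mult_left_mono L2_phi_bound[OF G]) simp
      finally show ?thesis by (simp add: mult.commute)
    next
      case False
      have "C \<ge> 0" unfolding C_def by (simp add: add_nonneg_nonneg)
      then show ?thesis using False by (simp add: f_def kt_def)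
    qed
    then show "norm (LINT w|lborel. norm (f j w)) \<le> C * cmod (phi r j z)" using nn by simp
  qed
  have "(\<lambda>j. integral\<^sup>L lborel (f j)) sums (LINT w|lborel. (\<Sum>j. f j w))"
    by (rule sums_integral[OF int AEs sint])
  moreover have "(LINT w|lborel. (\<Sum>j. f j w)) = intop (kernelK r J) G z"
  proof -
    have "(\<Sum>j. f j w) = kernelK r J z w * G w" for w
      unfolding f_def kernelK_eq by (rule suminf_mult2[symmetric, OF summable_norm_cancel[OF summable_kt]])
    then show ?thesis unfolding intop_def by simp
  qed
  ultimately show ?thesis by (simp add: intf)
qed

lemma combo_L2: "(\<lambda>z. \<Sum>j\<in>S. c j * phi r j z) \<in> L2"
  by (intro L2_sum L2_cmult phi_L2)

lemma combo_inner_self: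
  assumes S: "finite S"
  shows "L2_inner (\<lambda>z. \<Sum>j\<in>S. c j * phi r j z) (\<lambda>z. \<Sum>j\<in>S. c j * phi r j z) = (\<Sum>j\<in>S. c j * cnj (c j))"
proof -
  have "L2_inner (\<lambda>z. \<Sum>j\<in>S. c j * phi r j z) (\<lambda>z. \<Sum>j\<in>S. c j * phi r j z)
     = (\<Sum>j\<in>S. c j * L2_inner (phi r j) (\<lambda>z. \<Sum>k\<in>S. c k * phi r k z))"
    by (rule L2_inner_sum_left) (auto intro: phi_L2 combo_L2)
  also have "\<dots> = (\<Sum>j\<in>S. c j * (\<Sum>k\<in>S. cnj (c k) * L2_inner (phi r j) (phi r k)))"
    by (intro sum.cong refl arg_cong[where f="\<lambda>x. c _ * x"] L2_inner_sum_right) (auto intro: phi_L2)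
  also have "\<dots> = (\<Sum>j\<in>S. c j * cnj (c j))"
    using S by (simp add: phi_inner if_distrib sum.delta cong: if_cong)
  finally show ?thesis .
qed

lemma combo_norm:
  assumes S: "finite S"
  shows "(LINT z|lborel. (cmod (\<Sum>j\<in>S. c j * phi r j z))^2) = (\<Sum>j\<in>S. (cmod (c j))^2)"
proof -
  have "complex_of_real (LINT z|lborel. (cmod (\<Sum>j\<in>S. c j * phi r j z))^2)
      = (\<Sum>j\<in>S. c j * cnj (c j))"
    using L2_inner_self[OF combo_L2[where S=S and c=c and r=r]] combo_inner_self[OF S, of c r] by simp
  also have "\<dots> = complex_of_real (\<Sum>j\<in>S. (cmod (c j))^2)"
    unfolding of_real_sum by (simp only: complex_norm_square)
  finally show ?thesis by (simp only: of_real_eq_iff)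
qed

lemma bessel:
  assumes G: "G \<in> L2" and S: "finite S"
  shows "(\<Sum>j\<in>S. (cmod (L2_inner G (phi r j)))^2) \<le> (LINT z|lborel. (cmod (G z))^2)"
proof -
  define a where "a j = L2_inner G (phi r j)" for j
  define P where "P z = (\<Sum>j\<in>S. a j * phi r j z)" for z
  define s where "s = (\<Sum>j\<in>S. a j * cnj (a j))"
  have P: "P \<in> L2" unfolding P_def[abs_def] by (rule combo_L2)
  have GP: "L2_inner G P = s"
  proof -
    have "L2_inner G P = (\<Sum>j\<in>S. cnj (a j) * L2_inner G (phi r j))"
      unfolding P_def[abs_def] by (rule L2_inner_sum_right) (auto intro: phi_L2 G)
    then show ?thesis by (simp add: s_def a_def mult.commute)
  qed
  have PG: "L2_inner P G = s"
  proof -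
    have "L2_inner P G = cnj (L2_inner G P)" by (rule L2_inner_cnj)
    also have "\<dots> = s" unfolding GP s_def by (simp add: mult.commute)
    finally show ?thesis .
  qed
  have PP: "L2_inner P P = s" unfolding P_def[abs_def] s_def by (rule combo_inner_self[OF S])
  have D: "(\<lambda>z. G z - P z) \<in> L2" by (rule L2_diff[OF G P])
  have "L2_inner (\<lambda>z. G z - P z) (\<lambda>z. G z - P z) = L2_inner G (\<lambda>z. G z - P z) - L2_inner P (\<lambda>z. G z - P z)"
    by (rule L2_inner_diff_left[OF G P D])
  also have "\<dots> = (L2_inner G G - L2_inner G P) - (L2_inner P G - L2_inner P P)"
    using L2_inner_diff_right[OF G P G] L2_inner_diff_right[OF G P P] by simp
  also have "\<dots> = L2_inner G G - s" by (simp add: GP PG PP)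
  finally have eq: "complex_of_real (LINT z|lborel. (cmod (G z - P z))^2) = complex_of_real (LINT z|lborel. (cmod (G z))^2) - s"
    using L2_inner_self[OF D] L2_inner_self[OF G] by simp
  have sr: "s = complex_of_real (\<Sum>j\<in>S. (cmod (a j))^2)"
    unfolding s_def of_real_sum by (simp only: complex_norm_square)
  have "(LINT z|lborel. (cmod (G z - P z))^2) = (LINT z|lborel. (cmod (G z))^2) - (\<Sum>j\<in>S. (cmod (a j))^2)"
  proof -
    have "complex_of_real (LINT z|lborel. (cmod (G z - P z))^2) =
        complex_of_real ((LINT z|lborel. (cmod (G z))^2) - (\<Sum>j\<in>S. (cmod (a j))^2))"
      using eq unfolding sr of_real_diff .
    then show ?thesis by (simp only: of_real_eq_iff)
  qed
  moreover have "(LINT z|lborel. (cmod (G z - P z))^2) \<ge> 0" by simp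
  ultimately show ?thesis unfolding a_def by linarith
qed

lemma sum_ivl_le_tail:
  fixes f :: "nat \<Rightarrow> real"
  assumes f: "summable f" and nn: "\<And>j. f j \<ge> 0" and nm: "n \<le> m"
  shows "(\<Sum>j\<in>{n..<m}. f j) \<le> (\<Sum>k. f (k + n))"
proof -
  have img: "{n..<m} = (\<lambda>k. k + n) ` {..<m-n}"
  proof
    show "{n..<m} \<subseteq> (\<lambda>k. k + n) ` {..<m-n}"
    proof
      fix x assume "x \<in> {n..<m}"
      then show "x \<in> (\<lambda>k. k + n) ` {..<m-n}" by (intro image_eqI[where x="x - n"]) auto
    qed
  qed auto
  have "(\<Sum>j\<in>{n..<m}. f j) = (\<Sum>k<m-n. f (k + n))"
    unfolding img by (subst sum.reindex) (auto simp: inj_on_def)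
  also have "\<dots> \<le> (\<Sum>k. f (k + n))"
    by (rule sum_le_suminf) (use f nn in auto)
  finally show ?thesis .
qed

lemma tail_L2:
  fixes c :: "nat \<Rightarrow> complex" and F :: "complex \<Rightarrow> complex"
  assumes sums: "\<And>z. (\<lambda>j. c j * phi r j z) sums F z"
    and sc: "summable (\<lambda>j. (cmod (c j))^2)"
  shows "F \<in> L2"
    and "(\<lambda>z. F z - (\<Sum>j<n. c j * phi r j z)) \<in> L2"
    and "(LINT z|lborel. (cmod (F z - (\<Sum>j<n. c j * phi r j z)))^2) \<le> (\<Sum>k. (cmod (c (k + n)))^2)"
proof -
  define S where "S m z = (\<Sum>j<m. c j * phi r j z)" for m z
  define tl where "tl = (\<Sum>k. (cmod (c (k + n)))^2)"
  have sct: "summable (\<lambda>k. (cmod (c (k + n)))^2)"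
    using summable_iff_shift[where f="\<lambda>j. (cmod (c j))^2" and k=n] sc by simp
  have tl0: "tl \<ge> 0" unfolding tl_def by (intro suminf_nonneg sct) simp
  have Sm[measurable]: "S m \<in> borel_measurable lborel" for m
    using combo_L2[where S="{..<m}" and c=c and r=r] unfolding S_def[abs_def] by (simp add: L2_def)
  have lim: "(\<lambda>m. S m z) \<longlonglongrightarrow> F z" for z
    using sums[of z] unfolding sums_def S_def by simp
  have Fm[measurable]: "F \<in> borel_measurable lborel"
    by (rule borel_measurable_LIMSEQ_metric[OF Sm lim])
  define u where "u m z = ennreal ((cmod (S m z - S n z))^2)" for m z
  have um[measurable]: "u m \<in> borel_measurable lborel" for m unfolding u_def by measurable
  have ulim: "liminf (\<lambda>m. u m z) = ennreal ((cmod (F z - S n z))^2)" for z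
  proof (rule lim_imp_Liminf)
    show "(\<lambda>m. u m z) \<longlonglongrightarrow> ennreal ((cmod (F z - S n z))^2)"
      unfolding u_def by (intro tendsto_ennrealI tendsto_intros lim)
  qed simp
  have int_u: "integral\<^sup>N lborel (u m) \<le> ennreal tl" if "m \<ge> n" for m
  proof -
    have "S m z - S n z = (\<Sum>j\<in>{n..<m}. c j * phi r j z)" for z
      unfolding S_def using sum_diff_nat_ivl[OF _ that, of 0 "\<lambda>j. c j * phi r j z"]
      by (simp add: atLeast0LessThan)
    then have eqf: "u m = (\<lambda>z. ennreal ((cmod (\<Sum>j\<in>{n..<m}. c j * phi r j z))^2))"
      unfolding u_def by (simp add: fun_eq_iff)
    have "integral\<^sup>N lborel (u m) = ennreal (LINT z|lborel. (cmod (\<Sum>j\<in>{n..<m}. c j * phi r j z))^2)"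
      unfolding eqf
      by (rule nn_integral_eq_integral) (use L2_D(2)[OF combo_L2[where S="{n..<m}" and c=c and r=r]] in auto)
    also have "\<dots> = ennreal (\<Sum>j\<in>{n..<m}. (cmod (c j))^2)" by (simp add: combo_norm)
    also have "\<dots> \<le> ennreal tl"
      unfolding tl_def by (intro ennreal_leI sum_ivl_le_tail[OF sc _ that]) simp
    finally show ?thesis .
  qed
  have "(\<integral>\<^sup>+z. ennreal ((cmod (F z - S n z))^2) \<partial>lborel) = (\<integral>\<^sup>+z. liminf (\<lambda>m. u m z) \<partial>lborel)"
    by (simp add: ulim)
  also have "\<dots> \<le> liminf (\<lambda>m. integral\<^sup>N lborel (u m))"
    by (rule nn_integral_liminf[OF um])
  also have "\<dots> \<le> ennreal tl"
    by (rule Liminf_le) (use int_u in \<open>auto simp: eventually_sequentially\<close>)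
  finally have nnle: "(\<integral>\<^sup>+z. ennreal ((cmod (F z - S n z))^2) \<partial>lborel) \<le> ennreal tl" .
  have Dm[measurable]: "(\<lambda>z. F z - S n z) \<in> borel_measurable lborel" by measurable
  have intD: "integrable lborel (\<lambda>z. (cmod (F z - S n z))^2)"
  proof (rule integrableI_bounded)
    show "(\<lambda>z. (cmod (F z - S n z))^2) \<in> borel_measurable lborel" by measurable
    have "(\<integral>\<^sup>+z. ennreal (norm ((cmod (F z - S n z))^2)) \<partial>lborel) \<le> ennreal tl" using nnle by simp
    then show "(\<integral>\<^sup>+z. ennreal (norm ((cmod (F z - S n z))^2)) \<partial>lborel) < \<infinity>"
      using ennreal_less_top[of tl] unfolding infinity_ennreal_def by (rule le_less_trans)
  qed
  have DL2: "(\<lambda>z. F z - S n z) \<in> L2" by (rule L2_I[OF Dm intD])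
  then show "(\<lambda>z. F z - (\<Sum>j<n. c j * phi r j z)) \<in> L2" unfolding S_def .
  have "(\<lambda>z. (F z - S n z) + S n z) \<in> L2"
    by (rule L2_add[OF DL2]) (unfold S_def[abs_def], rule combo_L2)
  then show "F \<in> L2" by simp
  have "ennreal (LINT z|lborel. (cmod (F z - S n z))^2) = (\<integral>\<^sup>+z. ennreal ((cmod (F z - S n z))^2) \<partial>lborel)"
    by (rule nn_integral_eq_integral[symmetric, OF intD]) simp
  then have "ennreal (LINT z|lborel. (cmod (F z - S n z))^2) \<le> ennreal tl" using nnle by simp
  then show "(LINT z|lborel. (cmod (F z - (\<Sum>j<n. c j * phi r j z)))^2) \<le> (\<Sum>k. (cmod (c (k + n)))^2)"
    using tl0 unfolding S_def tl_def by (simp add: ennreal_le_iff)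
qed

definition cf :: "nat \<Rightarrow> nat set \<Rightarrow> (complex \<Rightarrow> complex) \<Rightarrow> nat \<Rightarrow> complex" where
  "cf r J G j = (if j \<in> J then L2_inner G (phi r j) else 0)"

lemma T_sums: "G \<in> L2 \<Longrightarrow> (\<lambda>j. cf r J G j * phi r j z) sums intop (kernelK r J) G z"
proof -
  assume G: "G \<in> L2"
  have "(\<lambda>j. cf r J G j * phi r j z) = (\<lambda>j. if j \<in> J then L2_inner G (phi r j) * phi r j z else 0)"
    by (auto simp: fun_eq_iff cf_def)
  then show ?thesis using intop_sums[OF G, of J r z] by simp
qed

lemma cf_summable: assumes G: "G \<in> L2" shows "summable (\<lambda>j. (cmod (cf r J G j))^2)"
proof (rule summableI_nonneg_bounded)
  fix n
  have "(\<Sum>j<n. (cmod (cf r J G j))^2) \<le> (\<Sum>j<n. (cmod (L2_inner G (phi r j)))^2)"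
    by (intro sum_mono) (auto simp: cf_def)
  also have "\<dots> \<le> (LINT z|lborel. (cmod (G z))^2)" by (rule bessel[OF G]) simp
  finally show "(\<Sum>j<n. (cmod (cf r J G j))^2) \<le> (LINT z|lborel. (cmod (G z))^2)" .
qed simp

lemma T_phi: assumes k: "k \<in> J" shows "intop (kernelK r J) (phi r k) z = phi r k z"
proof -
  have "(\<lambda>j. cf r J (phi r k) j * phi r j z) = (\<lambda>j. if j = k then phi r j z else 0)"
    using k by (auto simp: fun_eq_iff cf_def phi_inner)
  then have "(\<lambda>j. if j = k then phi r j z else 0) sums intop (kernelK r J) (phi r k) z"
    using T_sums[OF phi_L2[of r k], where r=r and J=J and z=z] by simp
  then show ?thesis using sums_single[of k "\<lambda>j. phi r j z"] by (rule sums_unique2)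
qed

lemma sq_tri: "(cmod (a - b))^2 \<le> 2 * (cmod (a - m))^2 + 2 * (cmod (m - b))^2"
proof -
  have "cmod (a - b) \<le> cmod (a - m) + cmod (m - b)" using norm_triangle_ineq[of "a - m" "m - b"] by simp
  then have "(cmod (a - b))^2 \<le> (cmod (a - m) + cmod (m - b))^2" by (intro power_mono) auto
  also have "\<dots> \<le> 2 * (cmod (a - m))^2 + 2 * (cmod (m - b))^2"
    using prod_le_sq2[of "cmod (a - m)" "cmod (m - b)"] by (simp add: power2_sum)
  finally show ?thesis .
qed

lemma sqrt_lt_sq: "x \<ge> 0 \<Longrightarrow> e > 0 \<Longrightarrow> sqrt x < e \<longleftrightarrow> x < e^2"
  by (metis real_sqrt_less_iff real_sqrt_pow2_iff power2_eq_square real_sqrt_mult_self abs_of_pos real_sqrt_abs less_eq_real_def)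

lemma density:
  assumes F: "F \<in> L2" and e: "e > 0" and G: "G \<in> L2"
    and FG: "L2_norm (\<lambda>z. F z - intop (kernelK r J) G z) < e / 2"
  shows "\<exists>S c. finite S \<and> S \<subseteq> phi r ` J \<and> L2_norm (\<lambda>z. F z - (\<Sum>\<phi>\<in>S. c \<phi> * \<phi> z)) < e"
proof -
  define TG where "TG = intop (kernelK r J) G"
  define c where "c = cf r J G"
  have sums: "(\<lambda>j. c j * phi r j z) sums TG z" for z unfolding c_def TG_def by (rule T_sums[OF G])
  have sc: "summable (\<lambda>j. (cmod (c j))^2)" unfolding c_def by (rule cf_summable[OF G])
  have TGL2: "TG \<in> L2" by (rule tail_L2(1)[OF sums sc])
  obtain n where n: "\<And>m. m \<ge> n \<Longrightarrow> norm (\<Sum>k. (cmod (c (k + m)))^2) < e^2 / 8"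
    using suminf_exist_split[of "e^2/8", OF _ sc] e by auto
  define P where "P z = (\<Sum>j<n. c j * phi r j z)" for z
  have PL2: "P \<in> L2" unfolding P_def[abs_def] by (rule combo_L2)
  have tail: "(LINT z|lborel. (cmod (TG z - P z))^2) < e^2 / 8"
  proof -
    have "(LINT z|lborel. (cmod (TG z - P z))^2) \<le> (\<Sum>k. (cmod (c (k + n)))^2)"
      unfolding P_def by (rule tail_L2(3)[OF sums sc])
    also have "\<dots> < e^2 / 8" using n[of n] by simp
    finally show ?thesis .
  qed
  have FTG: "(LINT z|lborel. (cmod (F z - TG z))^2) < (e/2)^2"
  proof -
    have "sqrt (LINT z|lborel. (cmod (F z - TG z))^2) < e / 2"
      using FG unfolding L2_norm_def TG_def .
    then show ?thesis using sqrt_lt_sq[of "LINT z|lborel. (cmod (F z - TG z))^2" "e/2"] e by simp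
  qed
  have L2a: "(\<lambda>z. F z - TG z) \<in> L2" by (rule L2_diff[OF F TGL2])
  have L2b: "(\<lambda>z. TG z - P z) \<in> L2" by (rule L2_diff[OF TGL2 PL2])
  have L2c: "(\<lambda>z. F z - P z) \<in> L2" by (rule L2_diff[OF F PL2])
  have "(LINT z|lborel. (cmod (F z - P z))^2) \<le>
        (LINT z|lborel. 2 * (cmod (F z - TG z))^2 + 2 * (cmod (TG z - P z))^2)"
    by (intro integral_mono L2_D(2)[OF L2c] Bochner_Integration.integrable_add integrable_mult_right
          L2_D(2)[OF L2a] L2_D(2)[OF L2b] sq_tri)
  also have "\<dots> = 2 * (LINT z|lborel. (cmod (F z - TG z))^2) + 2 * (LINT z|lborel. (cmod (TG z - P z))^2)"
    using L2_D(2)[OF L2a] L2_D(2)[OF L2b] by simp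
  also have "\<dots> < e^2"
  proof -
    have a: "(LINT z|lborel. (cmod (F z - TG z))^2) < e^2/4" using FTG by (simp add: power_divide)
    have "e^2 > 0" using e by simp
    then show ?thesis using a tail by linarith
  qed
  finally have lt: "(LINT z|lborel. (cmod (F z - P z))^2) < e^2" .
  then have normlt: "L2_norm (\<lambda>z. F z - P z) < e"
    unfolding L2_norm_def using sqrt_lt_sq[of "LINT z|lborel. (cmod (F z - P z))^2" e] e by simp
  define S where "S = phi r ` ({..<n} \<inter> J)"
  define d where "d \<phi> = c (inv (phi r) \<phi>)" for \<phi>
  have inj: "inj (phi r)" by (rule phi_inj)
  have "(\<Sum>\<phi>\<in>S. d \<phi> * \<phi> z) = P z" for z
  proof -
    have "(\<Sum>\<phi>\<in>S. d \<phi> * \<phi> z) = (\<Sum>j\<in>{..<n} \<inter> J. d (phi r j) * phi r j z)"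
      unfolding S_def by (rule sum.reindex[OF inj_on_subset[OF inj], simplified]) 
    also have "\<dots> = (\<Sum>j\<in>{..<n} \<inter> J. c j * phi r j z)"
      by (simp add: d_def inv_f_f[OF inj])
    also have "\<dots> = (\<Sum>j<n. c j * phi r j z)"
      by (rule sum.mono_neutral_left) (auto simp: c_def cf_def)
    finally show ?thesis unfolding P_def .
  qed
  then have "L2_norm (\<lambda>z. F z - (\<Sum>\<phi>\<in>S. d \<phi> * \<phi> z)) < e" using normlt by simp
  moreover have "finite S" "S \<subseteq> phi r ` J" unfolding S_def by auto
  ultimately show ?thesis by blast
qed

theorem theorem1p5:
  fixes r :: nat and J :: "nat set"
  assumes "J = UNIV \<or> (\<exists>N::nat. N \<ge> 1 \<and> J = {..<N})"
  shows "simultaneously_observable (kernelK r J) {ball 0 R | R::real. R > 0}"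
proof -
  define \<F> where "\<F> = {ball (0::complex) R | R::real. R > 0}"
  have U: "\<Union>\<F> = UNIV"
  proof (rule set_eqI, rule iffI)
    fix z :: complex
    have "z \<in> ball 0 (cmod z + 1)" by simp
    then show "z \<in> \<Union>\<F>" unfolding \<F>_def by (auto intro!: exI[of _ "cmod z + 1"] add_nonneg_pos)
  qed simp
  define T where "T = restr_op (kernelK r J) UNIV"
  have T: "T = intop (kernelK r J)"
    unfolding T_def restr_op_def by (simp add: fun_eq_iff)
  define B where "B = phi r ` J"
  have Tphi: "T (phi r k) = phi r k" if "k \<in> J" for k
    unfolding T using T_phi[OF that] by (simp add: fun_eq_iff)
  have sub: "B \<subseteq> range_closure T"
  proof
    fix \<phi> assume "\<phi> \<in> B"
    then obtain k where k: "k \<in> J" "\<phi> = phi r k" unfolding B_def by auto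
    show "\<phi> \<in> range_closure T"
      unfolding range_closure_def
    proof (intro CollectI conjI allI impI)
      show "\<phi> \<in> L2" using k phi_L2 by simp
      fix e :: real assume "e > 0"
      then show "\<exists>G\<in>L2. L2_norm (\<lambda>z. \<phi> z - T G z) < e"
        using k Tphi[of k] phi_L2[of r k] by (intro bexI[of _ \<phi>]) (auto simp: L2_norm_def)
    qed
  qed
  have orth: "orth_basis_of B (range_closure T)"
    unfolding orth_basis_of_def
  proof (intro conjI ballI impI allI)
    show "B \<subseteq> range_closure T" by (rule sub)
  next
    fix \<phi> assume "\<phi> \<in> B" then show "\<not> (AE z in lborel. \<phi> z = 0)"
      unfolding B_def using phi_not_AE_zero by auto
  next
    fix \<phi> \<psi> assume "\<phi> \<in> B" "\<psi> \<in> B" "\<phi> \<noteq> \<psi>"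
    then show "L2_inner \<phi> \<psi> = 0" unfolding B_def by (auto simp: phi_inner)
  next
    fix F and e :: real assume F: "F \<in> range_closure T" and e: "e > 0"
    have FL2: "F \<in> L2" and R: "\<forall>e>0. \<exists>G\<in>L2. L2_norm (\<lambda>z. F z - T G z) < e"
      using F unfolding range_closure_def by auto
    have "e / 2 > 0" using e by simp
    then obtain G where G: "G \<in> L2" "L2_norm (\<lambda>z. F z - T G z) < e / 2"
      using R by blast
    then have G': "L2_norm (\<lambda>z. F z - intop (kernelK r J) G z) < e / 2" unfolding T by simp
    show "\<exists>S c. finite S \<and> S \<subseteq> B \<and> L2_norm (\<lambda>z. F z - (\<Sum>\<phi>\<in>S. c \<phi> * \<phi> z)) < e"
      unfolding B_def by (rule density[OF FL2 e G(1) G'])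
  qed
  have eig: "\<forall>\<phi>\<in>B. eigenfunction T \<phi>"
  proof
    fix \<phi> assume "\<phi> \<in> B"
    then obtain k where k: "k \<in> J" "\<phi> = phi r k" unfolding B_def by auto
    show "eigenfunction T \<phi>"
      unfolding eigenfunction_def using k phi_L2 phi_not_AE_zero Tphi[OF k(1)]
      by (auto intro!: exI[of _ 1])
  qed
  have balls: "\<forall>A\<in>\<F>. \<forall>\<phi>\<in>B. \<forall>\<psi>\<in>B. \<phi> \<noteq> \<psi> \<longrightarrow> L2_inner_on A \<phi> \<psi> = 0"
    unfolding \<F>_def B_def by (force intro: phi_inner_on_ball)
  show ?thesis
    unfolding simultaneously_observable_def Let_def \<F>_def[symmetric] U T_def[symmetric]
    using orth eig balls by blast
qed

end
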